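(* Let $u$ be a distribution on $\mathbb{F}^n$ that is homogeneous of some degree $\chi_\Lambda$. Then: (1) for $x\neq0$ and $\xi\neq0$: $(x,\xi)\in\mathrm{WF}(u)$ if and only if $(\xi,-x)\in\mathrm{WF}(\mathcal F u)$; (2) for $x\neq0$: $x\in\mathrm{supp}\,u$ if and only if $(0,-x)\in\mathrm{WF}(\mathcal F u)$; (3) for $\xi\neq0$: $\xi\in\mathrm{supp}\,\mathcal F u$ if and only if $(0,\xi)\in\mathrm{WF}(u)$.
   Context: $\mathbb{F}$ is a non-archimedean local field of characteristic $0$ with ring of integers $\mathfrak o_{\mathbb{F}}$, uniformizer $\varpi$, absolute value $|\cdot|$, $|x|=\max_i|x_i|$ on $\mathbb{F}^n$; $\chi$ is a character of $(\mathbb{F},+)$ with kernel $\mathfrak o_{\mathbb{F}}$; $\mathcal F\phi(\xi)=\int\phi(x)\chi(-x\cdot\xi)dx$ with $x\cdot\xi=\sum x_j\xi_j$ and self-dual Haar measure, extended to distributions by $\mathcal F u(\phi)=u(\mathcal F\phi)$ (and to compactly supported $v$ by $\mathcal Fv(\xi)=v(\chi(-\,\cdot\,\xi))$). $\mathcal S(\mathbb{F}^n)$: locally constant compactly supported functions; distributions: its dual. A finite index subgroup $\Lambda\subseteq\mathbb{F}^\times$ with $\varpi\in\Lambda$ is fixed. A distribution $u$ is homogeneous of degree $\chi_\Lambda$, for a homomorphism $\chi_\Lambda:\Lambda\to\mathbb C^\times$, if $u(\phi_\lambda)=\chi_\Lambda(\lambda)u(\phi)$ for all $\lambda\in\Lambda$,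 $\phi\in\mathcal S(\mathbb{F}^n)$, where $\phi_\lambda(x)=|\lambda|^{-n}\phi(\lambda^{-1}x)$. A cone is a $\Lambda$-stable subset of $\mathbb{F}^n\setminus0$; $\mathrm{AC}(A)$ is the complement in $\mathbb{F}^n\setminus0$ of the union of open cones meeting $A$ in a bounded set; for compactly supported $v$, $\Sigma(v)=\mathrm{AC}(\mathrm{supp}\,\mathcal F v)$; $\Sigma_x(u)=\bigcap_{\phi\in\mathcal S,\phi(x)\neq0}\Sigma(\phi u)$; $\mathrm{WF}(u)=\{(x,\xi)\in\mathbb{F}^n\times(\mathbb{F}^n\setminus0):\xi\in\Sigma_x(u)\}$. *)

theory Defs
  imports Complex_Main "HOL-Library.Function_Algebras"
begin

text \<open>av is the normalized absolute value, w a uniformizer. A non-archimedean local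
field is a field complete for a discrete non-archimedean absolute value with finite
residue field; the absolute value is normalized: |w| = 1/q, q = size of residue field.\<close>

definition nonarch_local_field :: "('a::field_char_0 \<Rightarrow> real) \<Rightarrow> 'a \<Rightarrow> bool" where
  "nonarch_local_field av w \<longleftrightarrow>
     av 0 = 0 \<and> (\<forall>x. x \<noteq> 0 \<longrightarrow> av x > 0) \<and>
     (\<forall>x y. av (x * y) = av x * av y) \<and>
     (\<forall>x y. av (x + y) \<le> max (av x) (av y)) \<and>
     w \<noteq> 0 \<and> av w < 1 \<and>
     (\<forall>x. x \<noteq> 0 \<longrightarrow> (\<exists>k::int. av x = av w powi k)) \<and>
     (\<exists>R. finite R \<and> R \<subseteq> {x. av x \<le> 1} \<and>
          (\<forall>x. av x \<le> 1 \<longrightarrow> (\<exists>!r. r \<in> R \<and> av (x - r) < 1)) \<and>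
          av w = 1 / real (card R)) \<and>
     (\<forall>f :: nat \<Rightarrow> 'a. (\<forall>e>0. \<exists>N. \<forall>m\<ge>N. \<forall>n\<ge>N. av (f m - f n) < e) \<longrightarrow>
          (\<exists>L. \<forall>e>0. \<exists>N. \<forall>n\<ge>N. av (f n - L) < e))"

definition additive_char :: "('a::field_char_0 \<Rightarrow> real) \<Rightarrow> ('a \<Rightarrow> complex) \<Rightarrow> bool" where
  "additive_char av \<chi> \<longleftrightarrow>
     (\<forall>x y. \<chi> (x + y) = \<chi> x * \<chi> y) \<and> (\<forall>x. cmod (\<chi> x) = 1) \<and>
     (\<forall>x. \<chi> x = 1 \<longleftrightarrow> av x \<le> 1)"

definition nrm :: "('a \<Rightarrow> real) \<Rightarrow> ('n::finite \<Rightarrow> 'a) \<Rightarrow> real" where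
  "nrm av x = Max (range (\<lambda>i. av (x i)))"

definition dotp :: "('n::finite \<Rightarrow> 'a::comm_ring) \<Rightarrow> ('n \<Rightarrow> 'a) \<Rightarrow> 'a" where
  "dotp x y = (\<Sum>i\<in>UNIV. x i * y i)"

definition smul :: "'a::times \<Rightarrow> ('n \<Rightarrow> 'a) \<Rightarrow> ('n \<Rightarrow> 'a)" where
  "smul c x = (\<lambda>i. c * x i)"

definition openF :: "('a::ab_group_add \<Rightarrow> real) \<Rightarrow> ('n::finite \<Rightarrow> 'a) set \<Rightarrow> bool" where
  "openF av U \<longleftrightarrow> (\<forall>x\<in>U. \<exists>r>0. \<forall>y. nrm av (y - x) < r \<longrightarrow> y \<in> U)"

definition closureF :: "('a::ab_group_add \<Rightarrow> real) \<Rightarrow> ('n::finite \<Rightarrow> 'a) set \<Rightarrow> ('n \<Rightarrow> 'a) set" where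
  "closureF av A = {x. \<forall>r>0. \<exists>y\<in>A. nrm av (y - x) < r}"

definition boundedF :: "('a \<Rightarrow> real) \<Rightarrow> ('n::finite \<Rightarrow> 'a) set \<Rightarrow> bool" where
  "boundedF av A \<longleftrightarrow> (\<exists>C. \<forall>x\<in>A. nrm av x \<le> C)"

text \<open>Schwartz--Bruhat space: locally constant functions with compact support
(support is clopen for locally constant functions, and compact = closed and bounded).\<close>
definition SF :: "('a::ab_group_add \<Rightarrow> real) \<Rightarrow> (('n::finite \<Rightarrow> 'a) \<Rightarrow> complex) set" where
  "SF av = {\<phi>. (\<forall>x. \<exists>r>0. \<forall>y. nrm av (y - x) < r \<longrightarrow> \<phi> y = \<phi> x) \<and>
               boundedF av (closureF av {x. \<phi> x \<noteq> 0})}"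

definition FT :: "((('n::finite \<Rightarrow> 'a::comm_ring) \<Rightarrow> complex) \<Rightarrow> complex) \<Rightarrow> ('a \<Rightarrow> complex)
                  \<Rightarrow> (('n \<Rightarrow> 'a) \<Rightarrow> complex) \<Rightarrow> (('n \<Rightarrow> 'a) \<Rightarrow> complex)" where
  "FT I \<chi> \<phi> = (\<lambda>\<xi>. I (\<lambda>x. \<phi> x * \<chi> (- dotp x \<xi>)))"

text \<open>Integration against the self-dual Haar measure: a positive, translation invariant
linear functional on S for which Fourier inversion holds in the self-dual form.\<close>
definition self_dual_haar :: "('a::field_char_0 \<Rightarrow> real) \<Rightarrow> ('a \<Rightarrow> complex)
        \<Rightarrow> ((('n::finite \<Rightarrow> 'a) \<Rightarrow> complex) \<Rightarrow> complex) \<Rightarrow> bool" where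
  "self_dual_haar av \<chi> I \<longleftrightarrow>
     (\<forall>\<phi>\<in>SF av. \<forall>\<psi>\<in>SF av. I (\<lambda>x. \<phi> x + \<psi> x) = I \<phi> + I \<psi>) \<and>
     (\<forall>\<phi>\<in>SF av. \<forall>c. I (\<lambda>x. c * \<phi> x) = c * I \<phi>) \<and>
     (\<forall>\<phi>\<in>SF av. \<forall>a. I (\<lambda>x. \<phi> (x + a)) = I \<phi>) \<and>
     (\<forall>\<phi>\<in>SF av. (\<forall>x. Im (\<phi> x) = 0 \<and> Re (\<phi> x) \<ge> 0) \<longrightarrow> Im (I \<phi>) = 0 \<and> Re (I \<phi>) \<ge> 0) \<and>
     (\<forall>\<phi>\<in>SF av. \<forall>x. FT I \<chi> (FT I \<chi> \<phi>) x = \<phi> (- x))"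

definition distribution :: "('a::ab_group_add \<Rightarrow> real) \<Rightarrow> ((('n::finite \<Rightarrow> 'a) \<Rightarrow> complex) \<Rightarrow> complex) \<Rightarrow> bool" where
  "distribution av u \<longleftrightarrow>
     (\<forall>\<phi>\<in>SF av. \<forall>\<psi>\<in>SF av. u (\<lambda>x. \<phi> x + \<psi> x) = u \<phi> + u \<psi>) \<and>
     (\<forall>\<phi>\<in>SF av. \<forall>c. u (\<lambda>x. c * \<phi> x) = c * u \<phi>)"

definition FTd :: "((('n::finite \<Rightarrow> 'a::comm_ring) \<Rightarrow> complex) \<Rightarrow> complex) \<Rightarrow> ('a \<Rightarrow> complex)
     \<Rightarrow> ((('n \<Rightarrow> 'a) \<Rightarrow> complex) \<Rightarrow> complex) \<Rightarrow> ((('n \<Rightarrow> 'a) \<Rightarrow> complex) \<Rightarrow> complex)" where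
  "FTd I \<chi> u = (\<lambda>\<phi>. u (FT I \<chi> \<phi>))"

text \<open>Support of a distribution: complement of the largest open set on which it vanishes.\<close>
definition suppd :: "('a::ab_group_add \<Rightarrow> real) \<Rightarrow> ((('n::finite \<Rightarrow> 'a) \<Rightarrow> complex) \<Rightarrow> complex) \<Rightarrow> ('n \<Rightarrow> 'a) set" where
  "suppd av u = {x. \<forall>U. openF av U \<and> x \<in> U \<longrightarrow>
       (\<exists>\<phi>\<in>SF av. closureF av {y. \<phi> y \<noteq> 0} \<subseteq> U \<and> u \<phi> \<noteq> 0)}"

definition suppf :: "('a::ab_group_add \<Rightarrow> real) \<Rightarrow> (('n::finite \<Rightarrow> 'a) \<Rightarrow> complex) \<Rightarrow> ('n \<Rightarrow> 'a) set" where
  "suppf av f = closureF av {x. f x \<noteq> 0}"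

definition mult_d :: "(('n \<Rightarrow> 'a) \<Rightarrow> complex) \<Rightarrow> ((('n \<Rightarrow> 'a) \<Rightarrow> complex) \<Rightarrow> complex)
     \<Rightarrow> ((('n \<Rightarrow> 'a) \<Rightarrow> complex) \<Rightarrow> complex)" where
  "mult_d \<phi> u = (\<lambda>\<psi>. u (\<lambda>y. \<phi> y * \<psi> y))"

text \<open>A compactly supported distribution v applied to an arbitrary locally constant
function psi: v(rho psi) with rho in S equal to 1 on a neighbourhood of supp v.\<close>
definition cs_ext :: "('a::ab_group_add \<Rightarrow> real) \<Rightarrow> ((('n::finite \<Rightarrow> 'a) \<Rightarrow> complex) \<Rightarrow> complex)
     \<Rightarrow> (('n \<Rightarrow> 'a) \<Rightarrow> complex) \<Rightarrow> complex" where
  "cs_ext av v \<psi> =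
     (let \<rho> = (SOME \<rho>. \<rho> \<in> SF av \<and> (\<exists>U. openF av U \<and> suppd av v \<subseteq> U \<and> (\<forall>x\<in>U. \<rho> x = 1)))
      in v (\<lambda>x. \<rho> x * \<psi> x))"

definition FTcs :: "('a::comm_ring \<Rightarrow> real) \<Rightarrow> ('a \<Rightarrow> complex) \<Rightarrow> ((('n::finite \<Rightarrow> 'a) \<Rightarrow> complex) \<Rightarrow> complex)
     \<Rightarrow> ('n \<Rightarrow> 'a) \<Rightarrow> complex" where
  "FTcs av \<chi> v = (\<lambda>\<xi>. cs_ext av v (\<lambda>x. \<chi> (- dotp x \<xi>)))"

definition fin_index_subgroup :: "'a::field set \<Rightarrow> bool" where
  "fin_index_subgroup \<Lambda> \<longleftrightarrow>
     \<Lambda> \<subseteq> {x. x \<noteq> 0} \<and> 1 \<in> \<Lambda> \<and> (\<forall>a\<in>\<Lambda>. \<forall>b\<in>\<Lambda>. a * b \<in> \<Lambda>) \<and>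
     (\<forall>a\<in>\<Lambda>. inverse a \<in> \<Lambda>) \<and>
     (\<exists>R. finite R \<and> R \<subseteq> {x. x \<noteq> 0} \<and> (\<forall>x. x \<noteq> 0 \<longrightarrow> (\<exists>r\<in>R. x * inverse r \<in> \<Lambda>)))"

definition dil :: "('a::field \<Rightarrow> real) \<Rightarrow> 'a \<Rightarrow> (('n::finite \<Rightarrow> 'a) \<Rightarrow> complex) \<Rightarrow> (('n \<Rightarrow> 'a) \<Rightarrow> complex)" where
  "dil av c \<phi> = (\<lambda>x. complex_of_real (av c powi (- int (card (UNIV :: 'n set)))) * \<phi> (smul (inverse c) x))"

definition homogeneous :: "('a::field \<Rightarrow> real) \<Rightarrow> 'a set \<Rightarrow> ('a \<Rightarrow> complex)
     \<Rightarrow> ((('n::finite \<Rightarrow> 'a) \<Rightarrow> complex) \<Rightarrow> complex) \<Rightarrow> bool" where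
  "homogeneous av \<Lambda> chiL u \<longleftrightarrow>
     (\<forall>a\<in>\<Lambda>. \<forall>b\<in>\<Lambda>. chiL (a * b) = chiL a * chiL b) \<and> (\<forall>a\<in>\<Lambda>. chiL a \<noteq> 0) \<and>
     (\<forall>c\<in>\<Lambda>. \<forall>\<phi>\<in>SF av. u (dil av c \<phi>) = chiL c * u \<phi>)"

definition is_cone :: "'a::field set \<Rightarrow> ('n \<Rightarrow> 'a) set \<Rightarrow> bool" where
  "is_cone \<Lambda> \<Gamma> \<longleftrightarrow> \<Gamma> \<subseteq> {x. x \<noteq> 0} \<and> (\<forall>c\<in>\<Lambda>. \<forall>x\<in>\<Gamma>. smul c x \<in> \<Gamma>)"

definition AC :: "('a::field \<Rightarrow> real) \<Rightarrow> 'a set \<Rightarrow> ('n::finite \<Rightarrow> 'a) set \<Rightarrow> ('n \<Rightarrow> 'a) set" where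
  "AC av \<Lambda> A = {x. x \<noteq> 0} -
     \<Union>{\<Gamma>. is_cone \<Lambda> \<Gamma> \<and> openF av \<Gamma> \<and> boundedF av (\<Gamma> \<inter> A)}"

definition Sigma_cs :: "('a::field \<Rightarrow> real) \<Rightarrow> 'a set \<Rightarrow> ('a \<Rightarrow> complex)
     \<Rightarrow> ((('n::finite \<Rightarrow> 'a) \<Rightarrow> complex) \<Rightarrow> complex) \<Rightarrow> ('n \<Rightarrow> 'a) set" where
  "Sigma_cs av \<Lambda> \<chi> v = AC av \<Lambda> (suppf av (FTcs av \<chi> v))"

definition Sigma_at :: "('a::field \<Rightarrow> real) \<Rightarrow> 'a set \<Rightarrow> ('a \<Rightarrow> complex)
     \<Rightarrow> ((('n::finite \<Rightarrow> 'a) \<Rightarrow> complex) \<Rightarrow> complex) \<Rightarrow> ('n \<Rightarrow> 'a) \<Rightarrow> ('n \<Rightarrow> 'a) set" where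
  "Sigma_at av \<Lambda> \<chi> u x = (\<Inter>\<phi>\<in>{\<phi>\<in>SF av. \<phi> x \<noteq> 0}. Sigma_cs av \<Lambda> \<chi> (mult_d \<phi> u))"

definition WF :: "('a::field \<Rightarrow> real) \<Rightarrow> 'a set \<Rightarrow> ('a \<Rightarrow> complex)
     \<Rightarrow> ((('n::finite \<Rightarrow> 'a) \<Rightarrow> complex) \<Rightarrow> complex) \<Rightarrow> (('n \<Rightarrow> 'a) \<times> ('n \<Rightarrow> 'a)) set" where
  "WF av \<Lambda> \<chi> u = {(x, \<xi>). \<xi> \<noteq> 0 \<and> \<xi> \<in> Sigma_at av \<Lambda> \<chi> u x}"

end

theory Submission
  imports Defs "HOL-Library.FuncSet"
begin

locale padic =
  fixes av :: "'a::field_char_0 \<Rightarrow> real" and w :: 'a and \<chi> :: "'a \<Rightarrow> complex"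
    and I :: "(('n::finite \<Rightarrow> 'a) \<Rightarrow> complex) \<Rightarrow> complex"
    and \<Lambda> :: "'a set"
  assumes NL: "nonarch_local_field av w"
    and ACH: "additive_char av \<chi>"
    and SD: "self_dual_haar av \<chi> I"
    and FI: "fin_index_subgroup \<Lambda>" and wL: "w \<in> \<Lambda>"
begin

lemma av0[simp]: "av 0 = 0" using NL unfolding nonarch_local_field_def by blast
lemma avpos: "x \<noteq> 0 \<Longrightarrow> av x > 0" using NL unfolding nonarch_local_field_def by blast
lemma avmult: "av (x * y) = av x * av y" using NL unfolding nonarch_local_field_def by blast
lemma avultra: "av (x + y) \<le> max (av x) (av y)" using NL unfolding nonarch_local_field_def by blast
lemma wnz[simp]: "w \<noteq> 0" using NL unfolding nonarch_local_field_def by blast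
lemma avw1: "av w < 1" using NL unfolding nonarch_local_field_def by blast
lemma avdisc: "x \<noteq> 0 \<Longrightarrow> \<exists>k::int. av x = av w powi k" using NL unfolding nonarch_local_field_def by blast
lemma avcomplete: fixes f :: "nat \<Rightarrow> 'a" shows "(\<forall>e>0. \<exists>N. \<forall>m\<ge>N. \<forall>n\<ge>N. av (f m - f n) < e) \<Longrightarrow>
          (\<exists>L. \<forall>e>0. \<exists>N. \<forall>n\<ge>N. av (f n - L) < e)"
proof -
  assume a: "\<forall>e>0. \<exists>N. \<forall>m\<ge>N. \<forall>n\<ge>N. av (f m - f n) < e"
  have "\<forall>f :: nat \<Rightarrow> 'a. (\<forall>e>0. \<exists>N. \<forall>m\<ge>N. \<forall>n\<ge>N. av (f m - f n) < e) \<longrightarrow>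
          (\<exists>L. \<forall>e>0. \<exists>N. \<forall>n\<ge>N. av (f n - L) < e)"
    using NL unfolding nonarch_local_field_def by (elim conjE) assumption
  then show ?thesis using a by blast
qed
lemma resfield: "\<exists>R. finite R \<and> R \<subseteq> {x. av x \<le> 1} \<and>
          (\<forall>x. av x \<le> 1 \<longrightarrow> (\<exists>!r. r \<in> R \<and> av (x - r) < 1))"
  using NL unfolding nonarch_local_field_def by blast

lemma avnonneg[simp]: "av x \<ge> 0"
  by (cases "x = 0") (auto dest: avpos)
lemma av_eq0[simp]: "av x = 0 \<longleftrightarrow> x = 0"
  using avpos by fastforce
lemma avwpos[simp]: "av w > 0" using avpos by simp
lemma av1[simp]: "av 1 = 1"
proof -
  have "av 1 = av 1 * av 1" using avmult[of 1 1] by simp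
  moreover have "av 1 > 0" using avpos[of 1] by simp
  ultimately show ?thesis by simp
qed
lemma avm1[simp]: "av (-1) = 1"
proof -
  have "av (-1) * av (-1) = 1" using avmult[of "-1" "-1"] by simp
  moreover have "av (-1) \<ge> 0" by simp
  ultimately show ?thesis by (metis abs_of_nonneg abs_square_eq_1 power2_eq_square)
qed
lemma avneg[simp]: "av (- x) = av x"
  using avmult[of "-1" x] by simp
lemma avminus: "av (x - y) = av (y - x)"
  by (metis avneg minus_diff_eq)
lemma avdiff: "av (x - y) \<le> max (av x) (av y)"
  using avultra[of x "-y"] by simp
lemma avinv: "av (inverse x) = inverse (av x)"
proof (cases "x = 0")
  case False
  then have "av x * av (inverse x) = 1" using avmult[of x "inverse x"] by simp
  from inverse_unique[OF this] show ?thesis by simp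
qed simp
lemma avdiv: "av (x / y) = av x / av y"
  by (simp add: divide_inverse avmult avinv)
lemma avpowi: "av (w powi k) = av w powi k"
proof -
  have p: "av (x ^ n) = av x ^ n" for x n by (induction n) (auto simp: avmult)
  show ?thesis
    by (cases "k \<ge> 0") (auto simp: power_int_def p avinv power_inverse)
qed
lemma avsum_le: "finite A \<Longrightarrow> r \<ge> 0 \<Longrightarrow> (\<And>i. i \<in> A \<Longrightarrow> av (f i) \<le> r) \<Longrightarrow> av (sum f A) \<le> r"
proof (induction A rule: finite_induct)
  case (insert a A)
  have h1: "av (sum f A) \<le> r" "av (f a) \<le> r" using insert by auto
  have "av (f a + sum f A) \<le> max (av (f a)) (av (sum f A))" by (rule avultra)
  also have "\<dots> \<le> r" using h1 by simp
  finally show ?case using insert by simp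
qed simp
lemma av_ultra_eq: "av y < av x \<Longrightarrow> av (x + y) = av x"
proof -
  assume a: "av y < av x"
  have "av (x + y) \<le> av x" using avultra[of x y] a by simp
  moreover have "av x \<le> max (av (x + y)) (av y)" using avultra[of "x + y" "-y"] by simp
  ultimately show ?thesis using a by linarith
qed

definition rad :: "int \<Rightarrow> real" where "rad k = av w powi k"

lemma radpos[simp]: "rad k > 0" unfolding rad_def by simp
lemma radnn[simp]: "rad k \<ge> 0" using radpos less_imp_le by blast
lemma rad_add: "rad (a + b) = rad a * rad b"
  unfolding rad_def by (simp add: power_int_add)
lemma rad0[simp]: "rad 0 = 1" unfolding rad_def by simp
lemma rad_minus: "rad (- k) = inverse (rad k)" unfolding rad_def by (simp add: power_int_minus)
lemma rad_diff: "rad (a - b) = rad a / rad b"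
  using rad_add[of a "-b"] by (simp add: rad_minus divide_inverse)
lemma rad_strict: "k < k' \<Longrightarrow> rad k' < rad k"
  unfolding rad_def using avw1 by (intro power_int_strict_decreasing) auto
lemma rad_mono: "k \<le> k' \<Longrightarrow> rad k' \<le> rad k"
  using rad_strict by (cases "k = k'") (auto intro: less_imp_le)
lemma rad_less_iff: "rad k' < rad k \<longleftrightarrow> k < k'"
  using rad_strict rad_mono by (meson not_le)
lemma rad_le_iff: "rad k' \<le> rad k \<longleftrightarrow> k \<le> k'"
  using rad_strict rad_mono by (meson not_le)
lemma rad_inj: "rad k = rad k' \<longleftrightarrow> k = k'"
proof
  assume "rad k = rad k'"
  then have "k \<le> k'" "k' \<le> k" using rad_le_iff[of k k'] rad_le_iff[of k' k] by auto
  then show "k = k'" by simp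
qed simp
lemma av_w_powi: "av (w powi k) = rad k" unfolding rad_def by (simp add: avpowi)
lemma rad1: "rad 1 = av w" unfolding rad_def by simp
lemma rad_big: "\<exists>k. rad k > C"
proof -
  have "1 < inverse (av w)" using avw1 by (simp add: one_less_inverse)
  then obtain n where n: "C < inverse (av w) ^ n" using real_arch_pow by blast
  have "rad (- int n) = inverse (av w) ^ n" unfolding rad_def
    by (simp add: power_int_minus power_inverse)
  then show ?thesis using n by metis
qed
lemma rad_small: "e > 0 \<Longrightarrow> \<exists>k. rad k < e"
proof -
  assume e: "e > 0"
  obtain k where "rad k > inverse e" using rad_big by blast
  then have "rad (- k) < e" using e by (simp add: rad_minus inverse_less_imp_less)
  then show ?thesis by blast
qed
lemma rad_big_ge: "\<exists>k. k \<le> k0 \<and> rad k > C"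
proof -
  obtain k where "rad k > C" using rad_big by blast
  then have "rad (min k k0) > C" using rad_mono[of "min k k0" k] by linarith
  then show ?thesis by (intro exI[of _ "min k k0"]) auto
qed
lemma rad_small_ge: "e > 0 \<Longrightarrow> \<exists>k. k \<ge> k0 \<and> rad k < e"
proof -
  assume "e > 0"
  then obtain k where "rad k < e" using rad_small by blast
  then have "rad (max k k0) < e" using rad_mono[of k "max k k0"] by linarith
  then show ?thesis by (intro exI[of _ "max k k0"]) auto
qed

lemma av_disc_rad: "x \<noteq> 0 \<Longrightarrow> \<exists>k. av x = rad k"
  using avdisc unfolding rad_def by blast

lemma av_gt_rad: "av x > rad k \<Longrightarrow> av x \<ge> rad (k - 1)"
proof -
  assume a: "av x > rad k"
  then have "x \<noteq> 0" using radpos by (metis av0 not_less_iff_gr_or_eq)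
  then obtain j where j: "av x = rad j" using av_disc_rad by blast
  then have "j < k" using a rad_less_iff by simp
  then show ?thesis using j rad_le_iff by simp
qed

lemma chi_add: "\<chi> (x + y) = \<chi> x * \<chi> y" using ACH unfolding additive_char_def by blast
lemma chi_norm: "cmod (\<chi> x) = 1" using ACH unfolding additive_char_def by blast
lemma chi_one: "\<chi> x = 1 \<longleftrightarrow> av x \<le> 1" using ACH unfolding additive_char_def by blast
lemma chi_nz[simp]: "\<chi> x \<noteq> 0" using chi_norm[of x] by auto
lemma chi0[simp]: "\<chi> 0 = 1" using chi_one by simp
lemma chi_neg: "\<chi> (- x) * \<chi> x = 1" using chi_add[of "-x" x] by simp
lemma chi_diff: "\<chi> (x - y) = \<chi> x * \<chi> (- y)" using chi_add[of x "-y"] by simp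

end


context padic begin

lemma nrm_fin: "finite (range (\<lambda>i::'n. av (x i)))" by simp
lemma nrm_ge: "av (x i) \<le> nrm av x"
  unfolding nrm_def by (rule Max_ge) auto
lemma nrm_le_iff: "nrm av x \<le> r \<longleftrightarrow> (\<forall>i. av (x i) \<le> r)"
  unfolding nrm_def by (subst Max_le_iff) auto
lemma nrm_less_iff: "nrm av x < r \<longleftrightarrow> (\<forall>i. av (x i) < r)"
  unfolding nrm_def by (subst Max_less_iff) auto
lemma nrm_attained: "\<exists>i. nrm av x = av (x i)"
proof -
  have "Max (range (\<lambda>i. av (x i))) \<in> range (\<lambda>i. av (x i))" by (rule Max_in) auto
  then show ?thesis unfolding nrm_def by (metis rangeE)
qed
lemma nrm_nonneg[simp]: "nrm av x \<ge> 0"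
  using nrm_ge[of x undefined] avnonneg order.trans by blast
lemma nrm0[simp]: "nrm av 0 = 0"
  using nrm_attained[of 0] by auto
lemma nrm_eq0[simp]: "nrm av x = 0 \<longleftrightarrow> x = 0"
proof
  assume "nrm av x = 0"
  then have "\<forall>i. av (x i) \<le> 0" using nrm_le_iff[of x 0] by simp
  then have "\<forall>i. x i = 0" by (meson antisym av_eq0 avnonneg)
  then show "x = 0" by auto
qed simp
lemma nrm_pos: "x \<noteq> 0 \<Longrightarrow> nrm av x > 0"
  using nrm_eq0 nrm_nonneg by (metis less_eq_real_def)
lemma nrm_ultra: "nrm av (x + y) \<le> max (nrm av x) (nrm av y)"
  unfolding nrm_le_iff
proof
  fix i
  have "av ((x + y) i) \<le> max (av (x i)) (av (y i))" using avultra by simp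
  also have "\<dots> \<le> max (nrm av x) (nrm av y)" using nrm_ge max.mono by metis
  finally show "av ((x + y) i) \<le> max (nrm av x) (nrm av y)" .
qed
lemma nrm_neg[simp]: "nrm av (- x) = nrm av x"
  unfolding nrm_def by simp
lemma nrm_minus: "nrm av (x - y) = nrm av (y - x)"
  by (metis minus_diff_eq nrm_neg)
lemma nrm_diff: "nrm av (x - y) \<le> max (nrm av x) (nrm av y)"
  using nrm_ultra[of x "-y"] by simp
lemma nrm_tri: "nrm av (x - z) \<le> max (nrm av (x - y)) (nrm av (y - z))"
  using nrm_ultra[of "x - y" "y - z"] by simp
lemma nrm_smul: "nrm av (smul c x) = av c * nrm av x"
proof -
  obtain i where i: "nrm av (smul c x) = av (c * x i)" using nrm_attained[of "smul c x"] by (auto simp: smul_def)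
  obtain j where j: "nrm av x = av (x j)" using nrm_attained by blast
  have "av (c * x i) \<le> av c * nrm av x" using nrm_ge[of x i] by (simp add: avmult mult_left_mono)
  moreover have "av c * av (x j) \<le> nrm av (smul c x)" using nrm_ge[of "smul c x" j] by (simp add: smul_def avmult)
  ultimately show ?thesis using i j by simp
qed
lemma nrm_ultra_eq: "nrm av y < nrm av x \<Longrightarrow> nrm av (x + y) = nrm av x"
proof -
  assume a: "nrm av y < nrm av x"
  have "nrm av (x + y) \<le> nrm av x" using nrm_ultra[of x y] a by simp
  moreover have "nrm av x \<le> max (nrm av (x + y)) (nrm av y)" using nrm_ultra[of "x + y" "-y"] by simp
  ultimately show ?thesis using a by linarith
qed
lemma nrm_close_eq: "nrm av (y - x) < nrm av x \<Longrightarrow> nrm av y = nrm av x"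
  using nrm_ultra_eq[of "y - x" x] by simp
lemma nrm_disc: "x \<noteq> 0 \<Longrightarrow> \<exists>k. nrm av x = rad k"
proof -
  assume "x \<noteq> 0"
  then have "nrm av x > 0" by (rule nrm_pos)
  obtain i where i: "nrm av x = av (x i)" using nrm_attained by blast
  then have "x i \<noteq> 0" using \<open>nrm av x > 0\<close> by auto
  then show ?thesis using i av_disc_rad by metis
qed

lemma dotp_le: "av (dotp x y) \<le> nrm av x * nrm av y"
  unfolding dotp_def
  by (rule avsum_le) (auto simp: avmult intro!: mult_mono nrm_ge)
lemma dotp_add1: "dotp (x + y) z = dotp x z + dotp y z"
  unfolding dotp_def by (simp add: distrib_right sum.distrib)
lemma dotp_add2: "dotp z (x + y) = dotp z x + dotp z y"
  unfolding dotp_def by (simp add: distrib_left sum.distrib)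
lemma dotp_neg1: "dotp (- x) z = - dotp x z"
  unfolding dotp_def by (simp add: sum_negf)
lemma dotp_neg2: "dotp z (- x) = - dotp z x"
  unfolding dotp_def by (simp add: sum_negf)
lemma dotp_diff1: "dotp (x - y) z = dotp x z - dotp y z"
  unfolding dotp_def by (simp add: left_diff_distrib sum_subtractf)
lemma dotp_diff2: "dotp z (x - y) = dotp z x - dotp z y"
  unfolding dotp_def by (simp add: right_diff_distrib sum_subtractf)
lemma dotp_comm: "dotp x y = dotp y x"
  unfolding dotp_def by (simp add: mult.commute)
lemma dotp_smul1: "dotp (smul c x) y = c * dotp x y"
  unfolding dotp_def smul_def by (simp add: sum_distrib_left mult.assoc)
lemma dotp_smul2: "dotp x (smul c y) = c * dotp x y"
  unfolding dotp_def smul_def by (simp add: sum_distrib_left mult.left_commute)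
lemma dotp_zero1[simp]: "dotp 0 y = 0" unfolding dotp_def by simp
lemma dotp_zero2[simp]: "dotp x 0 = 0" unfolding dotp_def by simp

lemma smul_smul: "smul (a::'a) (smul b x) = smul (a * b) x" unfolding smul_def by (simp add: mult.assoc fun_eq_iff)
lemma smul_one[simp]: "smul (1::'a) x = x" unfolding smul_def by (simp add: fun_eq_iff)
lemma smul_diff: "smul (c::'a) x - smul c y = smul c (x - y)" unfolding smul_def by (auto simp: right_diff_distrib fun_eq_iff)
lemma smul_add: "smul (c::'a) x + smul c y = smul c (x + y)" unfolding smul_def by (auto simp: distrib_left fun_eq_iff)
lemma smul_neg: "smul (c::'a) (- x) = - smul c x" unfolding smul_def by (auto simp: fun_eq_iff)
lemma smul_zero[simp]: "smul (c::'a) 0 = 0" unfolding smul_def by (auto simp: fun_eq_iff)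
lemma smul_inv: "(c::'a) \<noteq> 0 \<Longrightarrow> smul (inverse c) (smul c x) = x" unfolding smul_def by (auto simp: fun_eq_iff)
lemma smul_inv2: "(c::'a) \<noteq> 0 \<Longrightarrow> smul c (smul (inverse c) x) = x" unfolding smul_def by (auto simp: fun_eq_iff)

definition ee :: "('n \<Rightarrow> 'a) \<Rightarrow> ('n \<Rightarrow> 'a) \<Rightarrow> complex" where
  "ee \<eta> x = \<chi> (- dotp x \<eta>)"

lemma ee_add: "ee (\<eta> + \<theta>) x = ee \<eta> x * ee \<theta> x"
  unfolding ee_def dotp_add2 by (simp add: chi_add[symmetric] add.commute)
lemma ee_addx: "ee \<eta> (x + y) = ee \<eta> x * ee \<eta> y"
  unfolding ee_def dotp_add1 by (simp add: chi_add[symmetric] add.commute)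
lemma ee_zero[simp]: "ee 0 x = 1" unfolding ee_def by simp
lemma ee_zerox[simp]: "ee \<eta> 0 = 1" unfolding ee_def by simp
lemma ee_nz[simp]: "ee \<eta> x \<noteq> 0" unfolding ee_def by simp
lemma ee_small: "av (dotp x \<eta>) \<le> 1 \<Longrightarrow> ee \<eta> x = 1"
  unfolding ee_def using chi_one by simp
lemma ee_small2: "nrm av x * nrm av \<eta> \<le> 1 \<Longrightarrow> ee \<eta> x = 1"
  using ee_small dotp_le order.trans by blast
lemma ee_comm: "ee \<eta> x = ee x \<eta>" unfolding ee_def by (simp add: dotp_comm)
lemma ee_neg_mult: "ee \<eta> x * ee (- \<eta>) x = 1"
  unfolding ee_def dotp_neg2 using chi_neg by (simp add: mult.commute)
lemma ee_neg: "ee (- \<eta>) x = ee \<eta> (- x)" unfolding ee_def by (simp add: dotp_neg1 dotp_neg2)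
lemma ee_diff: "ee (\<eta> - \<theta>) x = ee \<eta> x * ee (- \<theta>) x"
  using ee_add[of \<eta> "-\<theta>" x] by simp

definition ball :: "('n \<Rightarrow> 'a) \<Rightarrow> int \<Rightarrow> ('n \<Rightarrow> 'a) set" where
  "ball a k = {x. nrm av (x - a) \<le> rad k}"

definition ind :: "('n \<Rightarrow> 'a) set \<Rightarrow> ('n \<Rightarrow> 'a) \<Rightarrow> complex" where
  "ind S x = (if x \<in> S then 1 else 0)"

lemma mem_ball: "x \<in> ball a k \<longleftrightarrow> nrm av (x - a) \<le> rad k" unfolding ball_def by simp
lemma ball_center[simp]: "a \<in> ball a k" unfolding ball_def by simp
lemma ball_sym: "x \<in> ball a k \<longleftrightarrow> a \<in> ball x k" unfolding ball_def by (simp add: nrm_minus)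
lemma ball_sub: "b \<in> ball a k \<Longrightarrow> k \<le> k' \<Longrightarrow> ball b k' \<subseteq> ball a k"
proof
  fix x assume b: "b \<in> ball a k" and kk: "k \<le> k'" and x: "x \<in> ball b k'"
  have "nrm av (x - a) \<le> max (nrm av (x - b)) (nrm av (b - a))" by (rule nrm_tri)
  also have "\<dots> \<le> rad k" using b x rad_mono[OF kk] by (auto simp: mem_ball)
  finally show "x \<in> ball a k" by (simp add: mem_ball)
qed
lemma ball_mono: "k \<le> k' \<Longrightarrow> ball a k' \<subseteq> ball a k"
  using ball_sub[of a a k k'] by simp
lemma ball_eq: "b \<in> ball a k \<Longrightarrow> ball b k = ball a k"
  using ball_sub ball_sym by (metis order.refl subset_antisym)
lemma ball_disj: "x \<in> ball a k \<Longrightarrow> x \<in> ball b k \<Longrightarrow> ball a k = ball b k"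
  by (metis ball_eq ball_sym)
lemma ball_trans: "x \<in> ball a k \<Longrightarrow> a \<in> ball b k \<Longrightarrow> x \<in> ball b k"
  using ball_eq by blast
lemma ind_ball_eq: "b \<in> ball a k \<Longrightarrow> ind (ball b k) = ind (ball a k)"
  using ball_eq by simp
lemma ball_neg: "- x \<in> ball (- a) k \<longleftrightarrow> x \<in> ball a k"
  unfolding mem_ball by (metis minus_diff_minus nrm_neg)
lemma ball_transl: "x + c \<in> ball (a + c) k \<longleftrightarrow> x \<in> ball a k"
  unfolding mem_ball by simp
lemma ball_smul: "av c = rad j \<Longrightarrow> smul c x \<in> ball (smul c a) (k + j) \<longleftrightarrow> x \<in> ball a k"
  unfolding mem_ball smul_diff nrm_smul rad_add by (simp add: mult.commute)
lemma ball_nrm: "x \<in> ball a k \<Longrightarrow> rad k < nrm av a \<Longrightarrow> nrm av x = nrm av a"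
  unfolding mem_ball using nrm_close_eq by force
lemma ball_nrm_le: "x \<in> ball a k \<Longrightarrow> nrm av x \<le> max (nrm av a) (rad k)"
  unfolding mem_ball using nrm_ultra[of "x - a" a] by (simp add: max_def split: if_splits)
lemma ball0: "x \<in> ball 0 k \<longleftrightarrow> nrm av x \<le> rad k" unfolding mem_ball by simp
lemma ball_ne0: "rad k < nrm av a \<Longrightarrow> 0 \<notin> ball a k"
  unfolding mem_ball by simp

lemma openF_ball: "openF av (ball a k)"
  unfolding openF_def
proof
  fix x assume x: "x \<in> ball a k"
  show "\<exists>r>0. \<forall>y. nrm av (y - x) < r \<longrightarrow> y \<in> ball a k"
    using x ball_trans[of _ x k a] by (intro exI[of _ "rad k"]) (auto simp: mem_ball)
qed

lemma open_has_ball: "openF av U \<Longrightarrow> x \<in> U \<Longrightarrow> \<exists>k. ball x k \<subseteq> U"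
proof -
  assume U: "openF av U" and x: "x \<in> U"
  then obtain r where r: "r > 0" "\<forall>y. nrm av (y - x) < r \<longrightarrow> y \<in> U" unfolding openF_def by blast
  obtain k where "rad k < r" using rad_small r(1) by blast
  then show ?thesis using r(2) by (intro exI[of _ k]) (auto simp: mem_ball)
qed

lemma open_has_ball_ge: "openF av U \<Longrightarrow> x \<in> U \<Longrightarrow> \<exists>k\<ge>k0. ball x k \<subseteq> U"
  using open_has_ball ball_mono by (metis max.cobounded2 max.cobounded1 order.trans)

lemma closureF_ball: "closureF av (ball a k) = ball a k"
proof
  show "closureF av (ball a k) \<subseteq> ball a k"
  proof
    fix x assume "x \<in> closureF av (ball a k)"
    then obtain y where "y \<in> ball a k" "nrm av (y - x) < rad k" unfolding closureF_def by force
    then show "x \<in> ball a k" by (metis ball_sym ball_trans less_eq_real_def mem_ball)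
  qed
  show "ball a k \<subseteq> closureF av (ball a k)" unfolding closureF_def by force
qed

lemma closureF_sub: "A \<subseteq> closureF av A" unfolding closureF_def by force
lemma closureF_mono: "A \<subseteq> B \<Longrightarrow> closureF av A \<subseteq> closureF av B" unfolding closureF_def by blast

lemma supp_ind_ball: "closureF av {x. ind (ball a k) x \<noteq> 0} = ball a k"
  unfolding ind_def using closureF_ball by simp

definition lc :: "(('n \<Rightarrow> 'a) \<Rightarrow> 'b) \<Rightarrow> bool" where
  "lc f \<longleftrightarrow> (\<forall>x. \<exists>r>0. \<forall>y. nrm av (y - x) < r \<longrightarrow> f y = f x)"

definition bsupp :: "(('n \<Rightarrow> 'a) \<Rightarrow> complex) \<Rightarrow> bool" where
  "bsupp f \<longleftrightarrow> (\<exists>C. \<forall>x. f x \<noteq> 0 \<longrightarrow> nrm av x \<le> C)"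

lemma lc_ball: "lc f \<longleftrightarrow> (\<forall>x. \<exists>k. \<forall>y\<in>ball x k. f y = f x)"
proof
  assume a: "lc f"
  show "\<forall>x. \<exists>k. \<forall>y\<in>ball x k. f y = f x"
  proof
    fix x
    obtain r where r: "r > 0" "\<And>y. nrm av (y - x) < r \<Longrightarrow> f y = f x"
      using a unfolding lc_def by meson
    obtain k where k: "rad k < r" using rad_small r(1) by blast
    have "\<forall>y\<in>ball x k. f y = f x"
    proof
      fix y assume "y \<in> ball x k"
      then have "nrm av (y - x) < r" using k unfolding mem_ball by linarith
      then show "f y = f x" by (rule r(2))
    qed
    then show "\<exists>k. \<forall>y\<in>ball x k. f y = f x" by blast
  qed
next
  assume a: "\<forall>x. \<exists>k. \<forall>y\<in>ball x k. f y = f x"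
  show "lc f" unfolding lc_def
  proof
    fix x
    obtain k where k: "\<And>y. y \<in> ball x k \<Longrightarrow> f y = f x" using a by meson
    have "\<forall>y. nrm av (y - x) < rad k \<longrightarrow> f y = f x"
      using k unfolding mem_ball by (meson less_imp_le)
    then show "\<exists>r>0. \<forall>y. nrm av (y - x) < r \<longrightarrow> f y = f x" using radpos by blast
  qed
qed

lemma lcD: assumes "lc f" shows "\<exists>k. \<forall>y\<in>ball x k. f y = f x"
  using assms unfolding lc_ball by blast
lemma lcD_ge: assumes "lc f" shows "\<exists>k\<ge>k0. \<forall>y\<in>ball x k. f y = f x"
proof -
  obtain k where k: "\<forall>y\<in>ball x k. f y = f x" using lcD[OF assms] by blast
  have "ball x (max k k0) \<subseteq> ball x k" by (rule ball_mono) simp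
  then have "\<forall>y\<in>ball x (max k k0). f y = f x" using k by blast
  moreover have "max k k0 \<ge> k0" by simp
  ultimately show ?thesis by blast
qed

lemma lc_const[simp]: "lc (\<lambda>x. c)"
  unfolding lc_ball by blast
lemma lc_binop: assumes f: "lc f" and g: "lc g" shows "lc (\<lambda>x. h (f x) (g x))"
  unfolding lc_ball
proof
  fix x
  obtain k1 where k1: "\<forall>y\<in>ball x k1. f y = f x" using lcD[OF f] by blast
  obtain k2 where k2: "\<forall>y\<in>ball x k2. g y = g x" using lcD[OF g] by blast
  have s1: "ball x (max k1 k2) \<subseteq> ball x k1" by (rule ball_mono) simp
  have s2: "ball x (max k1 k2) \<subseteq> ball x k2" by (rule ball_mono) simp
  have "\<forall>y\<in>ball x (max k1 k2). h (f y) (g y) = h (f x) (g x)"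
  proof
    fix y assume "y \<in> ball x (max k1 k2)"
    then have "f y = f x" "g y = g x" using k1 k2 s1 s2 by blast+
    then show "h (f y) (g y) = h (f x) (g x)" by simp
  qed
  then show "\<exists>k. \<forall>y\<in>ball x k. h (f y) (g y) = h (f x) (g x)" by blast
qed
lemma lc_comp: "lc f \<Longrightarrow> lc (\<lambda>x. h (f x))"
  by (rule lc_binop[of f f "\<lambda>a b. h a", simplified])
lemma lc_mult: "lc f \<Longrightarrow> lc g \<Longrightarrow> lc (\<lambda>x. f x * g x)" by (rule lc_binop[of f g "(*)"])
lemma lc_add: "lc f \<Longrightarrow> lc g \<Longrightarrow> lc (\<lambda>x. f x + g x)" by (rule lc_binop[of f g "(+)"])
lemma lc_sum: "finite A \<Longrightarrow> (\<And>a. a \<in> A \<Longrightarrow> lc (f a)) \<Longrightarrow> lc (\<lambda>x. \<Sum>a\<in>A. f a x)"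
proof (induction A rule: finite_induct)
  case empty then show ?case by simp
next
  case (insert a A)
  have "lc (\<lambda>x. f a x + (\<Sum>b\<in>A. f b x))"
    using insert by (intro lc_add) auto
  then show ?case using insert by simp
qed
lemma lc_ind_ball: "lc (ind (ball a k))"
  unfolding lc_ball
proof
  fix x
  have "\<forall>y\<in>ball x k. (y \<in> ball a k) = (x \<in> ball a k)"
  proof
    fix y assume y: "y \<in> ball x k"
    show "(y \<in> ball a k) = (x \<in> ball a k)"
    proof
      assume "y \<in> ball a k"
      moreover have "x \<in> ball y k" using y ball_sym by blast
      ultimately show "x \<in> ball a k" using ball_trans[of x y k a] by blast
    next
      assume "x \<in> ball a k" then show "y \<in> ball a k" using ball_trans[of y x k a] y by blast
    qed
  qed
  then have "\<forall>y\<in>ball x k. ind (ball a k) y = ind (ball a k) x"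
    unfolding ind_def by (metis (full_types))
  then show "\<exists>j. \<forall>y\<in>ball x j. ind (ball a k) y = ind (ball a k) x" by blast
qed
lemma lc_ee: "lc (ee \<eta>)"
  unfolding lc_ball
proof
  fix x
  obtain k where k: "rad k * nrm av \<eta> \<le> 1"
  proof (cases "\<eta> = 0")
    case True then show ?thesis using that[of 0] by simp
  next
    case False
    then have "nrm av \<eta> > 0" by (rule nrm_pos)
    then obtain k where "rad k < inverse (nrm av \<eta>)" using rad_small by (meson positive_imp_inverse_positive)
    then have "rad k * nrm av \<eta> \<le> 1" using \<open>nrm av \<eta> > 0\<close> by (simp add: field_simps)
    then show ?thesis using that by blast
  qed
  show "\<exists>k. \<forall>y\<in>ball x k. ee \<eta> y = ee \<eta> x"
  proof (intro exI[of _ k] ballI)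
    fix y assume "y \<in> ball x k"
    then have "nrm av (y - x) * nrm av \<eta> \<le> 1" using k unfolding mem_ball
      by (meson mult_right_mono nrm_nonneg order.trans)
    then have "ee \<eta> (y - x) = 1" by (rule ee_small2)
    then show "ee \<eta> y = ee \<eta> x" using ee_addx[of \<eta> x "y - x"] by simp
  qed
qed
lemma lc_transl: assumes "lc f" shows "lc (\<lambda>x. f (x + c))"
  unfolding lc_ball
proof
  fix x
  obtain k where k: "\<forall>y\<in>ball (x + c) k. f y = f (x + c)" using lcD[OF assms] by blast
  have "\<forall>y\<in>ball x k. f (y + c) = f (x + c)"
  proof
    fix y assume "y \<in> ball x k"
    then have "y + c \<in> ball (x + c) k" using ball_transl by blast
    then show "f (y + c) = f (x + c)" using k by blast
  qed
  then show "\<exists>k. \<forall>y\<in>ball x k. f (y + c) = f (x + c)" by blast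
qed
lemma lc_neg: assumes "lc f" shows "lc (\<lambda>x. f (- x))"
  unfolding lc_ball
proof
  fix x
  obtain k where k: "\<forall>y\<in>ball (- x) k. f y = f (- x)" using lcD[OF assms] by blast
  have "\<forall>y\<in>ball x k. f (- y) = f (- x)"
  proof
    fix y assume "y \<in> ball x k"
    then have "- y \<in> ball (- x) k" using ball_neg by blast
    then show "f (- y) = f (- x)" using k by blast
  qed
  then show "\<exists>k. \<forall>y\<in>ball x k. f (- y) = f (- x)" by blast
qed

lemma bsupp_ball: "bsupp f \<longleftrightarrow> (\<exists>K. \<forall>x. f x \<noteq> 0 \<longrightarrow> x \<in> ball 0 K)"
proof
  assume "bsupp f"
  then obtain C where C: "\<And>x. f x \<noteq> 0 \<Longrightarrow> nrm av x \<le> C" unfolding bsupp_def by blast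
  obtain K where K: "rad K > C" using rad_big by blast
  have "\<forall>x. f x \<noteq> 0 \<longrightarrow> x \<in> ball 0 K"
  proof (intro allI impI)
    fix x assume "f x \<noteq> 0"
    then have "nrm av x \<le> rad K" using C K by (meson less_imp_le order.trans)
    then show "x \<in> ball 0 K" unfolding ball0 .
  qed
  then show "\<exists>K. \<forall>x. f x \<noteq> 0 \<longrightarrow> x \<in> ball 0 K" by blast
next
  assume "\<exists>K. \<forall>x. f x \<noteq> 0 \<longrightarrow> x \<in> ball 0 K"
  then obtain K where K: "\<And>x. f x \<noteq> 0 \<Longrightarrow> x \<in> ball 0 K" by blast
  have "\<forall>x. f x \<noteq> 0 \<longrightarrow> nrm av x \<le> rad K" using K unfolding ball0 by blast
  then show "bsupp f" unfolding bsupp_def by blast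
qed

lemma bsupp_ball_le: assumes "bsupp f" shows "\<exists>K\<le>K0. \<forall>x. f x \<noteq> 0 \<longrightarrow> x \<in> ball 0 K"
proof -
  obtain K where K: "\<And>x. f x \<noteq> 0 \<Longrightarrow> x \<in> ball 0 K" using assms unfolding bsupp_ball by blast
  have "ball 0 K \<subseteq> ball 0 (min K K0)" by (rule ball_mono) simp
  then have "\<forall>x. f x \<noteq> 0 \<longrightarrow> x \<in> ball 0 (min K K0)" using K by blast
  moreover have "min K K0 \<le> K0" by simp
  ultimately show ?thesis by blast
qed

lemma bsupp_closure: "boundedF av (closureF av {x. f x \<noteq> 0}) \<longleftrightarrow> bsupp f"
proof
  assume "boundedF av (closureF av {x. f x \<noteq> 0})"
  then obtain C where C: "\<And>x. x \<in> closureF av {x. f x \<noteq> 0} \<Longrightarrow> nrm av x \<le> C"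
    unfolding boundedF_def by blast
  have "\<forall>x. f x \<noteq> 0 \<longrightarrow> nrm av x \<le> C"
    using C closureF_sub[of "{x. f x \<noteq> 0}"] by blast
  then show "bsupp f" unfolding bsupp_def by blast
next
  assume "bsupp f"
  then obtain K where K: "\<And>x. f x \<noteq> 0 \<Longrightarrow> x \<in> ball 0 K" unfolding bsupp_ball by blast
  then have "{x. f x \<noteq> 0} \<subseteq> ball 0 K" by blast
  then have "closureF av {x. f x \<noteq> 0} \<subseteq> closureF av (ball 0 K)" by (rule closureF_mono)
  then have "closureF av {x. f x \<noteq> 0} \<subseteq> ball 0 K" unfolding closureF_ball .
  have "\<forall>x\<in>closureF av {x. f x \<noteq> 0}. nrm av x \<le> rad K"
  proof
    fix x assume "x \<in> closureF av {x. f x \<noteq> 0}"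
    then have "x \<in> ball 0 K" using \<open>closureF av {x. f x \<noteq> 0} \<subseteq> ball 0 K\<close> by (rule subsetD[rotated])
    then show "nrm av x \<le> rad K" by (simp only: ball0)
  qed
  then show "boundedF av (closureF av {x. f x \<noteq> 0})" unfolding boundedF_def by blast
qed

abbreviation SFn :: "(('n \<Rightarrow> 'a) \<Rightarrow> complex) set" where "SFn \<equiv> SF av"

lemma SF_iff: "f \<in> SFn \<longleftrightarrow> lc f \<and> bsupp f"
proof -
  have "f \<in> SFn \<longleftrightarrow> lc f \<and> boundedF av (closureF av {x. f x \<noteq> 0})"
    unfolding SF_def lc_def by simp
  then show ?thesis unfolding bsupp_closure .
qed

lemma SF_lc: "f \<in> SFn \<Longrightarrow> lc f" unfolding SF_iff by blast
lemma SF_bsupp: "f \<in> SFn \<Longrightarrow> bsupp f" unfolding SF_iff by blast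

lemma bsupp_mult1: "bsupp f \<Longrightarrow> bsupp (\<lambda>x. f x * g x)" unfolding bsupp_def by auto
lemma bsupp_mult2: "bsupp g \<Longrightarrow> bsupp (\<lambda>x. f x * g x)" unfolding bsupp_def by auto
lemma bsupp_add: assumes "bsupp f" "bsupp g" shows "bsupp (\<lambda>x. f x + g x)"
proof -
  obtain C1 where C1: "\<And>x. f x \<noteq> 0 \<Longrightarrow> nrm av x \<le> C1" using assms(1) unfolding bsupp_def by blast
  obtain C2 where C2: "\<And>x. g x \<noteq> 0 \<Longrightarrow> nrm av x \<le> C2" using assms(2) unfolding bsupp_def by blast
  have "\<forall>x. f x + g x \<noteq> 0 \<longrightarrow> nrm av x \<le> max C1 C2"
  proof (intro allI impI)
    fix x assume "f x + g x \<noteq> 0"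
    then have "f x \<noteq> 0 \<or> g x \<noteq> 0" by auto
    then show "nrm av x \<le> max C1 C2" using C1 C2 by (meson max.coboundedI1 max.coboundedI2)
  qed
  then show ?thesis unfolding bsupp_def by blast
qed
lemma bsupp_ind_ball: "bsupp (ind (ball a k))"
  unfolding bsupp_def ind_def using ball_nrm_le by (auto intro!: exI[of _ "max (nrm av a) (rad k)"])
lemma bsupp_zero: "bsupp (\<lambda>x. 0)" unfolding bsupp_def by simp

lemma SF_mult: "f \<in> SFn \<Longrightarrow> lc g \<Longrightarrow> (\<lambda>x. f x * g x) \<in> SFn"
  by (simp add: SF_iff lc_mult bsupp_mult1)
lemma SF_mult2: "g \<in> SFn \<Longrightarrow> lc f \<Longrightarrow> (\<lambda>x. f x * g x) \<in> SFn"
  by (simp add: SF_iff lc_mult bsupp_mult2)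
lemma SF_add: "f \<in> SFn \<Longrightarrow> g \<in> SFn \<Longrightarrow> (\<lambda>x. f x + g x) \<in> SFn"
  by (simp add: SF_iff lc_add bsupp_add)
lemma SF_cmult: "f \<in> SFn \<Longrightarrow> (\<lambda>x. c * f x) \<in> SFn"
  using SF_mult2[of f "\<lambda>x. c"] by simp
lemma SF_zero: "(\<lambda>x. 0) \<in> SFn" by (simp add: SF_iff bsupp_zero)
lemma SF_sum: "finite A \<Longrightarrow> (\<And>a. a \<in> A \<Longrightarrow> f a \<in> SFn) \<Longrightarrow> (\<lambda>x. \<Sum>a\<in>A. f a x) \<in> SFn"
  by (induction A rule: finite_induct) (auto intro: SF_add SF_zero)
lemma SF_ind_ball: "ind (ball a k) \<in> SFn"
  by (simp add: SF_iff lc_ind_ball bsupp_ind_ball)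

definition BC :: "('n \<Rightarrow> 'a) \<Rightarrow> int \<Rightarrow> ('n \<Rightarrow> 'a) \<Rightarrow> ('n \<Rightarrow> 'a) \<Rightarrow> complex" where
  "BC a k \<eta> = (\<lambda>x. ind (ball a k) x * ee \<eta> x)"

lemma SF_BC: "BC a k \<eta> \<in> SFn"
  unfolding BC_def by (rule SF_mult[OF SF_ind_ball lc_ee])

lemma BC_zero: "BC a k 0 = ind (ball a k)" unfolding BC_def by simp

lemma I_add: "f \<in> SFn \<Longrightarrow> g \<in> SFn \<Longrightarrow> I (\<lambda>x. f x + g x) = I f + I g"
  using SD unfolding self_dual_haar_def by blast
lemma I_cmult: "f \<in> SFn \<Longrightarrow> I (\<lambda>x. c * f x) = c * I f"
  using SD unfolding self_dual_haar_def by blast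
lemma I_transl: "f \<in> SFn \<Longrightarrow> I (\<lambda>x. f (x + a)) = I f"
  using SD unfolding self_dual_haar_def by blast
lemma I_inv: "f \<in> SFn \<Longrightarrow> FT I \<chi> (FT I \<chi> f) x = f (- x)"
  using SD unfolding self_dual_haar_def by blast
lemma I_pos: "f \<in> SFn \<Longrightarrow> (\<forall>x. Im (f x) = 0 \<and> Re (f x) \<ge> 0) \<Longrightarrow> Im (I f) = 0 \<and> Re (I f) \<ge> 0"
  using SD unfolding self_dual_haar_def by blast


abbreviation distn :: "((('n \<Rightarrow> 'a) \<Rightarrow> complex) \<Rightarrow> complex) \<Rightarrow> bool" where
  "distn v \<equiv> distribution av v"

lemma I_dist: "distn I"
  unfolding distribution_def by (simp add: I_add I_cmult)

lemma d_add: "distn v \<Longrightarrow> f \<in> SFn \<Longrightarrow> g \<in> SFn \<Longrightarrow> v (\<lambda>x. f x + g x) = v f + v g"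
  unfolding distribution_def by blast
lemma d_cmult: "distn v \<Longrightarrow> f \<in> SFn \<Longrightarrow> v (\<lambda>x. c * f x) = c * v f"
  unfolding distribution_def by blast
lemma d_zero: "distn v \<Longrightarrow> v (\<lambda>x. 0) = 0"
  using d_cmult[of v "\<lambda>x. 0" 0] SF_zero by simp
lemma d_sum: assumes d: "distn v" shows "finite A \<Longrightarrow> (\<And>a. a \<in> A \<Longrightarrow> f a \<in> SFn) \<Longrightarrow>
   v (\<lambda>x. \<Sum>a\<in>A. f a x) = (\<Sum>a\<in>A. v (f a))"
proof (induction A rule: finite_induct)
  case empty then show ?case using d_zero[OF d] by simp
next
  case (insert a A)
  have "v (\<lambda>x. \<Sum>b\<in>insert a A. f b x) = v (\<lambda>x. f a x + (\<Sum>b\<in>A. f b x))"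
    using insert by simp
  also have "\<dots> = v (f a) + v (\<lambda>x. \<Sum>b\<in>A. f b x)"
    using insert d_add[OF d, of "f a" "\<lambda>x. \<Sum>b\<in>A. f b x"] SF_sum[of A f] by simp
  finally show ?case using insert by simp
qed
lemma d_eq_zero: "distn v \<Longrightarrow> (\<forall>x. f x = 0) \<Longrightarrow> v f = 0"
proof -
  assume "distn v" "\<forall>x. f x = 0"
  then have "f = (\<lambda>x. 0)" by auto
  then show ?thesis using d_zero \<open>distn v\<close> by simp
qed
lemma d_diff: "distn v \<Longrightarrow> f \<in> SFn \<Longrightarrow> g \<in> SFn \<Longrightarrow> v (\<lambda>x. f x - g x) = v f - v g"
proof -
  assume d: "distn v" and f: "f \<in> SFn" and g: "g \<in> SFn"
  have "v (\<lambda>x. f x + (-1) * g x) = v f + v (\<lambda>x. (-1) * g x)"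
    by (rule d_add[OF d f SF_cmult[OF g]])
  also have "v (\<lambda>x. (-1) * g x) = (-1) * v g" by (rule d_cmult[OF d g])
  finally have "v (\<lambda>x. f x + (-1) * g x) = v f - v g" by simp
  moreover have "(\<lambda>x. f x + (-1) * g x) = (\<lambda>x. f x - g x)" by simp
  ultimately show ?thesis by simp
qed

end


context padic begin

section \<open>digit grids\<close>

definition R0 :: "'a set" where
  "R0 = (SOME R. finite R \<and> R \<subseteq> {x. av x \<le> 1} \<and> (\<forall>x. av x \<le> 1 \<longrightarrow> (\<exists>!r. r \<in> R \<and> av (x - r) < 1)))"

lemma R0: "finite R0" "R0 \<subseteq> {x. av x \<le> 1}" "\<And>x. av x \<le> 1 \<Longrightarrow> \<exists>!r. r \<in> R0 \<and> av (x - r) < 1"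
proof -
  have "finite R0 \<and> R0 \<subseteq> {x. av x \<le> 1} \<and> (\<forall>x. av x \<le> 1 \<longrightarrow> (\<exists>!r. r \<in> R0 \<and> av (x - r) < 1))"
    unfolding R0_def using resfield by (rule someI_ex)
  then show "finite R0" "R0 \<subseteq> {x. av x \<le> 1}" "\<And>x. av x \<le> 1 \<Longrightarrow> \<exists>!r. r \<in> R0 \<and> av (x - r) < 1"
    by blast+
qed

lemma R0_sep: "r \<in> R0 \<Longrightarrow> r' \<in> R0 \<Longrightarrow> r \<noteq> r' \<Longrightarrow> av (r - r') \<ge> 1"
proof (rule ccontr)
  assume r: "r \<in> R0" "r' \<in> R0" "r \<noteq> r'" "\<not> av (r - r') \<ge> 1"
  have "av r \<le> 1" using r(1) R0(2) by blast
  then have "\<exists>!s. s \<in> R0 \<and> av (r - s) < 1" by (rule R0(3))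
  moreover have "av (r - r) < 1" by simp
  moreover have "av (r - r') < 1" using r(4) by simp
  ultimately show False using r by blast
qed

lemma av_less_rad: "av z < rad k \<Longrightarrow> av z \<le> rad (k + 1)"
proof (cases "z = 0")
  case False
  assume a: "av z < rad k"
  obtain j where j: "av z = rad j" using av_disc_rad[OF False] by blast
  then have "k < j" using a rad_less_iff by simp
  then have "k + 1 \<le> j" by simp
  then show ?thesis using j rad_mono by simp
qed simp

lemma av_wpow: "av (w ^ m) = rad (int m)"
  using av_w_powi[of "int m"] by simp

fun T :: "nat \<Rightarrow> 'a set" where
  "T 0 = {0}"
| "T (Suc m) = (\<lambda>(t, r). t + w ^ m * r) ` (T m \<times> R0)"

lemma T_finite: "finite (T m)"
  by (induction m) (auto simp: R0(1))

lemma T_le1: "t \<in> T m \<Longrightarrow> av t \<le> 1"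
proof (induction m arbitrary: t)
  case (Suc m)
  then obtain t0 r where tr: "t = t0 + w ^ m * r" "t0 \<in> T m" "r \<in> R0" by auto
  have "av t0 \<le> 1" using Suc tr by blast
  moreover have "av r \<le> 1" using tr(3) R0(2) by blast
  moreover have "av (w ^ m) \<le> 1" using av_wpow rad_mono[of 0 "int m"] by simp
  ultimately have "av (w ^ m * r) \<le> 1" by (simp add: avmult mult_le_one)
  then show ?case using tr(1) avultra[of t0 "w ^ m * r"] \<open>av t0 \<le> 1\<close> by simp
qed simp

lemma T_cover: "av x \<le> 1 \<Longrightarrow> \<exists>t\<in>T m. av (x - t) \<le> rad (int m)"
proof (induction m)
  case 0 then show ?case by simp
next
  case (Suc m)
  then obtain t where t: "t \<in> T m" "av (x - t) \<le> rad (int m)" by blast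
  define y where "y = (x - t) / w ^ m"
  have wm: "w ^ m \<noteq> 0" by simp
  have xy: "x - t = w ^ m * y" unfolding y_def using wm by simp
  have "av y = av (x - t) / rad (int m)" unfolding y_def avdiv av_wpow ..
  then have "av y \<le> 1" using t(2) by (simp add: divide_le_eq_1)
  then obtain r where r: "r \<in> R0" "av (y - r) < 1" using R0(3) by blast
  have "av (y - r) \<le> rad 1" using av_less_rad[of "y - r" 0] r(2) by simp
  have "x - (t + w ^ m * r) = w ^ m * (y - r)" using xy by (simp add: algebra_simps)
  then have "av (x - (t + w ^ m * r)) = rad (int m) * av (y - r)" by (simp add: avmult av_wpow)
  also have "\<dots> \<le> rad (int m) * rad 1" using \<open>av (y - r) \<le> rad 1\<close> by (simp add: mult_left_mono)
  also have "\<dots> = rad (int (Suc m))" by (simp add: rad_add[symmetric] add.commute)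
  finally have "av (x - (t + w ^ m * r)) \<le> rad (int (Suc m))" .
  moreover have "t + w ^ m * r \<in> T (Suc m)" using t(1) r(1) by force
  ultimately show ?case by blast
qed

lemma T_sep: "t \<in> T m \<Longrightarrow> t' \<in> T m \<Longrightarrow> t \<noteq> t' \<Longrightarrow> av (t - t') > rad (int m)"
proof (induction m arbitrary: t t')
  case 0 then show ?case by simp
next
  case (Suc m)
  obtain t1 r1 where 1: "t = t1 + w ^ m * r1" "t1 \<in> T m" "r1 \<in> R0" using Suc.prems(1) by auto
  obtain t2 r2 where 2: "t' = t2 + w ^ m * r2" "t2 \<in> T m" "r2 \<in> R0" using Suc.prems(2) by auto
  have d: "t - t' = (t1 - t2) + w ^ m * (r1 - r2)" using 1 2 by (simp add: algebra_simps)
  have rs: "rad (int (Suc m)) < rad (int m)" by (simp add: rad_less_iff)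
  show ?case
  proof (cases "t1 = t2")
    case False
    then have a1: "av (t1 - t2) > rad (int m)" using Suc.IH 1 2 by blast
    have "av r1 \<le> 1" "av r2 \<le> 1" using 1(3) 2(3) R0(2) by blast+
    then have "av (r1 - r2) \<le> 1" using avdiff[of r1 r2] by simp
    then have "av (w ^ m * (r1 - r2)) \<le> rad (int m)" by (simp add: avmult av_wpow mult_left_le)
    then have "av (t - t') = av (t1 - t2)" unfolding d using a1 by (intro av_ultra_eq) simp
    then show ?thesis using a1 rs by simp
  next
    case True
    then have "r1 \<noteq> r2" using Suc.prems(3) 1 2 by auto
    then have "av (r1 - r2) \<ge> 1" using R0_sep 1(3) 2(3) by blast
    then have "rad (int m) * 1 \<le> rad (int m) * av (r1 - r2)" by (intro mult_left_mono) auto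
    then have "av (t - t') \<ge> rad (int m)" unfolding d True by (simp add: avmult av_wpow)
    then show ?thesis using rs by simp
  qed
qed

definition S1 :: "int \<Rightarrow> int \<Rightarrow> 'a set" where
  "S1 K M = (\<lambda>t. w powi K * t) ` T (nat (M - K))"

lemma S1_finite: "finite (S1 K M)" unfolding S1_def using T_finite by simp

lemma S1_le: "s \<in> S1 K M \<Longrightarrow> av s \<le> rad K"
  unfolding S1_def using T_le1 by (auto simp: avmult av_w_powi mult_left_le)

lemma S1_cover: assumes "K \<le> M" "av x \<le> rad K" shows "\<exists>s\<in>S1 K M. av (x - s) \<le> rad M"
proof -
  define y where "y = x / w powi K"
  have wk: "w powi K \<noteq> 0" by simp
  have xy: "x = w powi K * y" unfolding y_def using wk by simp
  have "av y \<le> 1" unfolding y_def avdiv av_w_powi using assms(2) by (simp add: divide_le_eq_1)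
  then obtain t where t: "t \<in> T (nat (M - K))" "av (y - t) \<le> rad (int (nat (M - K)))" using T_cover by blast
  have "int (nat (M - K)) = M - K" using assms(1) by simp
  then have t2: "av (y - t) \<le> rad (M - K)" using t(2) by simp
  have "x - w powi K * t = w powi K * (y - t)" using xy by (simp add: algebra_simps)
  then have "av (x - w powi K * t) = rad K * av (y - t)" by (simp add: avmult av_w_powi)
  also have "\<dots> \<le> rad K * rad (M - K)" using t2 by (simp add: mult_left_mono)
  also have "\<dots> = rad M" by (simp add: rad_add[symmetric])
  finally show ?thesis using t(1) unfolding S1_def by blast
qed

lemma S1_sep: assumes "K \<le> M" "s \<in> S1 K M" "s' \<in> S1 K M" "s \<noteq> s'" shows "av (s - s') > rad M"
proof -
  obtain t where t: "s = w powi K * t" "t \<in> T (nat (M - K))" using assms(2) unfolding S1_def by blast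
  obtain t' where t': "s' = w powi K * t'" "t' \<in> T (nat (M - K))" using assms(3) unfolding S1_def by blast
  have "t \<noteq> t'" using assms(4) t t' by auto
  then have "av (t - t') > rad (int (nat (M - K)))" using T_sep t t' by blast
  moreover have "int (nat (M - K)) = M - K" using assms(1) by simp
  ultimately have a: "av (t - t') > rad (M - K)" by simp
  have "s - s' = w powi K * (t - t')" using t t' by (simp add: algebra_simps)
  then have "av (s - s') = rad K * av (t - t')" by (simp add: avmult av_w_powi)
  also have "\<dots> > rad K * rad (M - K)" using a by simp
  also have "rad K * rad (M - K) = rad M" by (simp add: rad_add[symmetric])
  finally show ?thesis .
qed

definition grid :: "('n \<Rightarrow> 'a) \<Rightarrow> int \<Rightarrow> int \<Rightarrow> ('n \<Rightarrow> 'a) set" where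
  "grid c K M = (\<lambda>g. c + g) ` (PiE UNIV (\<lambda>_. S1 K M))"

lemma grid_finite: "finite (grid c K M)"
  unfolding grid_def using S1_finite by (intro finite_imageI finite_PiE) auto

lemma grid_sub: "g \<in> grid c K M \<Longrightarrow> g \<in> ball c K"
proof -
  assume "g \<in> grid c K M"
  then obtain h where h: "g = c + h" "h \<in> PiE UNIV (\<lambda>_. S1 K M)" unfolding grid_def by blast
  then have "\<forall>i. av (h i) \<le> rad K" using S1_le by (auto simp: PiE_UNIV_domain)
  then have "nrm av h \<le> rad K" by (simp add: nrm_le_iff)
  then show "g \<in> ball c K" unfolding mem_ball h(1) by simp
qed

lemma grid_cover: assumes "K \<le> M" "y \<in> ball c K" shows "\<exists>g\<in>grid c K M. y \<in> ball g M"
proof -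
  have "\<forall>i. av ((y - c) i) \<le> rad K" using assms(2) unfolding mem_ball nrm_le_iff by blast
  then have "\<forall>i. \<exists>s\<in>S1 K M. av ((y - c) i - s) \<le> rad M" using S1_cover[OF assms(1)] by blast
  then obtain h where h: "\<forall>i. h i \<in> S1 K M \<and> av ((y - c) i - h i) \<le> rad M" by metis
  then have "h \<in> PiE UNIV (\<lambda>_. S1 K M)" by (simp add: PiE_UNIV_domain)
  then have "c + h \<in> grid c K M" unfolding grid_def by blast
  moreover have "nrm av (y - (c + h)) \<le> rad M" unfolding nrm_le_iff using h by (simp add: algebra_simps)
  ultimately show ?thesis unfolding mem_ball by blast
qed

lemma grid_sep: assumes "K \<le> M" "g \<in> grid c K M" "g' \<in> grid c K M" "g \<noteq> g'" shows "g' \<notin> ball g M"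
proof -
  obtain h where h: "g = c + h" "h \<in> PiE UNIV (\<lambda>_. S1 K M)" using assms(2) unfolding grid_def by blast
  obtain h' where h': "g' = c + h'" "h' \<in> PiE UNIV (\<lambda>_. S1 K M)" using assms(3) unfolding grid_def by blast
  have "h \<noteq> h'" using assms(4) h h' by auto
  then obtain i where i: "h i \<noteq> h' i" by auto
  have "h' i \<in> S1 K M" "h i \<in> S1 K M" using h h' by (auto simp: PiE_UNIV_domain)
  then have "av (h' i - h i) > rad M" using S1_sep[OF assms(1)] i by metis
  moreover have "av ((g' - g) i) = av (h' i - h i)" using h h' by simp
  ultimately have "nrm av (g' - g) > rad M" using nrm_ge[of "g' - g" i] by linarith
  then show ?thesis unfolding mem_ball by simp
qed

lemma grid_unique: assumes "K \<le> M" "g \<in> grid c K M" "g' \<in> grid c K M" "y \<in> ball g M" "y \<in> ball g' M"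
  shows "g = g'"
proof (rule ccontr)
  assume "g \<noteq> g'"
  have "g' \<in> ball y M" using assms(5) ball_sym by blast
  then have "g' \<in> ball g M" using ball_trans assms(4) by blast
  then show False using grid_sep[OF assms(1-3) \<open>g \<noteq> g'\<close>] by blast
qed

definition uconst :: "(('n \<Rightarrow> 'a) \<Rightarrow> 'b) \<Rightarrow> int \<Rightarrow> bool" where
  "uconst f M \<longleftrightarrow> (\<forall>a. \<forall>y\<in>ball a M. f y = f a)"

lemma uconstD: "uconst f M \<Longrightarrow> y \<in> ball a M \<Longrightarrow> f y = f a" unfolding uconst_def by blast

lemma uconst_mono: "uconst f M \<Longrightarrow> M \<le> M' \<Longrightarrow> uconst f M'"
  unfolding uconst_def using ball_mono by blast

lemma decomp:
  assumes KM: "K \<le> M" and u: "uconst f M" and s: "\<And>y. f y \<noteq> 0 \<Longrightarrow> y \<in> ball c K"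
  shows "f y = (\<Sum>g\<in>grid c K M. f g * ind (ball g M) y)"
proof (cases "y \<in> ball c K")
  case True
  obtain g0 where g0: "g0 \<in> grid c K M" "y \<in> ball g0 M" using grid_cover[OF KM True] by blast
  have "(\<Sum>g\<in>grid c K M. f g * ind (ball g M) y) = (\<Sum>g\<in>grid c K M. if g = g0 then f g0 else 0)"
  proof (rule sum.cong)
    fix g assume g: "g \<in> grid c K M"
    show "f g * ind (ball g M) y = (if g = g0 then f g0 else 0)"
    proof (cases "g = g0")
      case True then show ?thesis using g0 by (simp add: ind_def)
    next
      case False
      then have "y \<notin> ball g M" using grid_unique[OF KM g g0(1) _ g0(2)] by blast
      then show ?thesis using False by (simp add: ind_def)
    qed
  qed simp
  also have "\<dots> = f g0" using g0(1) grid_finite by simp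
  also have "\<dots> = f y" using uconstD[OF u g0(2)] by simp
  finally show ?thesis by simp
next
  case False
  then have fy: "f y = 0" using s by blast
  have "\<forall>g\<in>grid c K M. ind (ball g M) y = 0"
  proof
    fix g assume g: "g \<in> grid c K M"
    have "ball g M \<subseteq> ball c K" using ball_sub[OF grid_sub[OF g] KM] .
    then show "ind (ball g M) y = 0" using False by (auto simp: ind_def)
  qed
  then show ?thesis using fy by simp
qed

lemma decomp_fun:
  assumes "K \<le> M" "uconst f M" "\<And>y. f y \<noteq> 0 \<Longrightarrow> y \<in> ball c K"
  shows "f = (\<lambda>y. \<Sum>g\<in>grid c K M. f g * ind (ball g M) y)"
  using decomp[OF assms] by (rule ext)

lemma uconst_ind_ball: "K \<le> M \<Longrightarrow> uconst (ind (ball c K)) M"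
  unfolding uconst_def
proof (intro allI ballI)
  fix a y assume KM: "K \<le> M" and y: "y \<in> ball a M"
  have y2: "y \<in> ball a K" using ball_mono[OF KM] y by blast
  have "y \<in> ball c K \<longleftrightarrow> a \<in> ball c K"
  proof
    assume "y \<in> ball c K"
    moreover have "a \<in> ball y K" using y2 ball_sym by blast
    ultimately show "a \<in> ball c K" using ball_trans[of a y K c] by blast
  next
    assume "a \<in> ball c K" then show "y \<in> ball c K" using ball_trans[of y a K c] y2 by blast
  qed
  then show "ind (ball c K) y = ind (ball c K) a" unfolding ind_def by (metis (full_types))
qed

lemma ball_decomp: assumes "K \<le> M"
  shows "ind (ball c K) = (\<lambda>y. \<Sum>g\<in>grid c K M. ind (ball g M) y)"
proof -
  have "ind (ball c K) = (\<lambda>y. \<Sum>g\<in>grid c K M. ind (ball c K) g * ind (ball g M) y)"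
    by (rule decomp_fun[OF assms uconst_ind_ball[OF assms]]) (simp add: ind_def split: if_splits)
  also have "\<dots> = (\<lambda>y. \<Sum>g\<in>grid c K M. ind (ball g M) y)"
    using grid_sub by (intro ext sum.cong) (auto simp: ind_def)
  finally show ?thesis .
qed

lemma I_ball_transl: "I (ind (ball g M)) = I (ind (ball 0 M))"
proof -
  have "I (\<lambda>x. ind (ball g M) (x + g)) = I (ind (ball g M))" by (rule I_transl[OF SF_ind_ball])
  moreover have "(\<lambda>x. ind (ball g M) (x + g)) = ind (ball 0 M)"
    using ball_transl[of _ g 0 M] by (auto simp: ind_def fun_eq_iff)
  ultimately show ?thesis by simp
qed

definition cI :: "int \<Rightarrow> complex" where "cI M = I (ind (ball 0 M))"

lemma I_ball: "I (ind (ball g M)) = cI M" unfolding cI_def by (rule I_ball_transl)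

lemma I_sum:
  assumes KM: "K \<le> M" and u: "uconst f M" and s: "\<And>y. f y \<noteq> 0 \<Longrightarrow> y \<in> ball c K"
  shows "I f = cI M * (\<Sum>g\<in>grid c K M. f g)"
proof -
  have "I f = I (\<lambda>y. \<Sum>g\<in>grid c K M. f g * ind (ball g M) y)"
    using decomp_fun[OF assms] by simp
  also have "\<dots> = (\<Sum>g\<in>grid c K M. I (\<lambda>y. f g * ind (ball g M) y))"
    by (rule d_sum[OF I_dist grid_finite]) (rule SF_cmult[OF SF_ind_ball])
  also have "\<dots> = (\<Sum>g\<in>grid c K M. f g * cI M)"
    by (rule sum.cong) (simp_all add: I_cmult[OF SF_ind_ball] I_ball)
  finally show ?thesis by (simp add: sum_distrib_left mult.commute)
qed

end


context padic begin

section \<open>compactness by bisection\<close>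

lemma fine_split:
  assumes mono: "\<And>a k b k'. P a k \<Longrightarrow> b \<in> ball a k \<Longrightarrow> k \<le> k' \<Longrightarrow> P b k'"
    and nf: "\<not> (\<exists>M\<ge>k. \<forall>b\<in>ball a k. P b M)"
  shows "\<exists>g\<in>ball a k. \<not> (\<exists>M\<ge>k + 1. \<forall>b\<in>ball g (k + 1). P b M)"
proof (rule ccontr)
  assume "\<not> (\<exists>g\<in>ball a k. \<not> (\<exists>M\<ge>k + 1. \<forall>b\<in>ball g (k + 1). P b M))"
  then have all: "\<forall>g\<in>grid a k (k + 1). \<exists>M. M \<ge> k + 1 \<and> (\<forall>b\<in>ball g (k + 1). P b M)"
    using grid_sub by blast
  then obtain Mf where Mf: "\<forall>g\<in>grid a k (k + 1). Mf g \<ge> k + 1 \<and> (\<forall>b\<in>ball g (k + 1). P b (Mf g))"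
    by metis
  define M where "M = Max (insert k (Mf ` grid a k (k + 1)))"
  have fin: "finite (insert k (Mf ` grid a k (k + 1)))" using grid_finite by simp
  have Mk: "M \<ge> k" unfolding M_def using fin by simp
  have MMf: "\<And>g. g \<in> grid a k (k + 1) \<Longrightarrow> Mf g \<le> M" unfolding M_def using fin by simp
  have "\<forall>b\<in>ball a k. P b M"
  proof
    fix b assume b: "b \<in> ball a k"
    obtain g where g: "g \<in> grid a k (k + 1)" "b \<in> ball g (k + 1)" using grid_cover[of k "k + 1" b a] b by auto
    have "P b (Mf g)" using Mf g by blast
    then show "P b M" using mono[of b "Mf g" b M] MMf[OF g(1)] by simp
  qed
  then show False using nf Mk by blast
qed

lemma seq_limit:
  fixes s :: "nat \<Rightarrow> 'n \<Rightarrow> 'a"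
  assumes step: "\<And>j. s (Suc j) \<in> ball (s j) (k + int j)"
  shows "\<exists>L. \<forall>j. L \<in> ball (s j) (k + int j)"
proof -
  have nest: "s i \<in> ball (s j) (k + int j)" if "j \<le> i" for i j
    using that
  proof (induction i)
    case 0 then show ?case by simp
  next
    case (Suc i)
    show ?case
    proof (cases "j = Suc i")
      case True then show ?thesis by simp
    next
      case False
      then have ji: "j \<le> i" using Suc.prems by simp
      then have si: "s i \<in> ball (s j) (k + int j)" using Suc.IH by blast
      have "ball (s i) (k + int i) \<subseteq> ball (s j) (k + int j)" using ball_sub[OF si] ji by simp
      then show ?thesis using step[of i] by blast
    qed
  qed
  have "\<forall>c. \<exists>Lc. \<forall>e>0. \<exists>N. \<forall>n\<ge>N. av (s n c - Lc) < e"
  proof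
    fix c
    show "\<exists>Lc. \<forall>e>0. \<exists>N. \<forall>n\<ge>N. av (s n c - Lc) < e"
    proof (rule avcomplete, intro allI impI)
      fix e :: real assume e: "e > 0"
      obtain k1 where k1: "k1 \<ge> k" "rad k1 < e" using rad_small_ge[OF e] by blast
      define N where "N = nat (k1 - k)"
      have "\<forall>m\<ge>N. \<forall>n\<ge>N. av (s m c - s n c) < e"
      proof (intro allI impI)
        fix m n assume mn: "m \<ge> N" "n \<ge> N"
        have "s m \<in> ball (s N) (k + int N)" "s n \<in> ball (s N) (k + int N)" using nest mn by blast+
        then have "s m \<in> ball (s n) (k + int N)" using ball_sym ball_trans by blast
        then have "av (s m c - s n c) \<le> rad (k + int N)" unfolding mem_ball
          using nrm_ge[of "s m - s n" c] by simp
        moreover have "k + int N \<ge> k1" unfolding N_def using k1 by simp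
        ultimately show "av (s m c - s n c) < e" using rad_mono k1(2) by (meson order.trans order_le_less_trans)
      qed
      then show "\<exists>N. \<forall>m\<ge>N. \<forall>n\<ge>N. av (s m c - s n c) < e" by blast
    qed
  qed
  then obtain L where L: "\<forall>c. \<forall>e>0. \<exists>N. \<forall>n\<ge>N. av (s n c - L c) < e" by metis
  have "\<forall>j. L \<in> ball (s j) (k + int j)"
  proof
    fix j
    have "\<forall>c. av (L c - s j c) \<le> rad (k + int j)"
    proof
      fix c
      obtain N where N: "\<forall>n\<ge>N. av (s n c - L c) < rad (k + int j)" using L radpos by blast
      define n where "n = max N j"
      have a1: "av (s n c - L c) < rad (k + int j)" using N unfolding n_def by simp
      have "s n \<in> ball (s j) (k + int j)" using nest unfolding n_def by simp
      then have a2: "av (s n c - s j c) \<le> rad (k + int j)" unfolding mem_ball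
        using nrm_ge[of "s n - s j" c] by simp
      have "L c - s j c = (s n c - s j c) + (L c - s n c)" by simp
      then have "av (L c - s j c) \<le> max (av (s n c - s j c)) (av (L c - s n c))"
        using avultra[of "s n c - s j c" "L c - s n c"] by simp
      moreover have "av (L c - s n c) < rad (k + int j)" using a1 avminus[of "s n c" "L c"] by simp
      ultimately show "av (L c - s j c) \<le> rad (k + int j)" using a2 by simp
    qed
    then show "L \<in> ball (s j) (k + int j)" unfolding mem_ball nrm_le_iff by simp
  qed
  then show ?thesis by blast
qed

lemma bisect:
  assumes mono: "\<And>a k b k'. P a k \<Longrightarrow> b \<in> ball a k \<Longrightarrow> k \<le> k' \<Longrightarrow> P b k'"
    and loc: "\<And>x. \<exists>k. P x k"
  shows "\<exists>M\<ge>k. \<forall>b\<in>ball a k. P b M"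
proof (rule ccontr)
  define fine where "fine = (\<lambda>a k. \<exists>M\<ge>k. \<forall>b\<in>ball a k. P b M)"
  assume nf0: "\<not> (\<exists>M\<ge>k. \<forall>b\<in>ball a k. P b M)"
  have split: "\<exists>g\<in>ball a' k'. \<not> fine g (k' + 1)" if "\<not> fine a' k'" for a' k'
    unfolding fine_def
    apply (rule fine_split[where P=P])
     apply (rule mono; assumption)
    using that unfolding fine_def by blast
  define s where "s = rec_nat a (\<lambda>j x. SOME g. g \<in> ball x (k + int j) \<and> \<not> fine g (k + int j + 1))"
  have s0: "s 0 = a" unfolding s_def by simp
  have sS: "s (Suc j) = (SOME g. g \<in> ball (s j) (k + int j) \<and> \<not> fine g (k + int j + 1))" for j
    unfolding s_def by simp
  have inv: "\<not> fine (s j) (k + int j) \<and> (s (Suc j) \<in> ball (s j) (k + int j))" for j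
  proof (induction j)
    case 0
    have "\<exists>g. g \<in> ball (s 0) (k + int 0) \<and> \<not> fine g (k + int 0 + 1)"
      using split[of a k] nf0 s0 unfolding fine_def by auto
    from someI_ex[OF this] show ?case using nf0 s0 sS[of 0] unfolding fine_def by auto
  next
    case (Suc j)
    have "\<exists>g. g \<in> ball (s j) (k + int j) \<and> \<not> fine g (k + int j + 1)"
      using Suc.IH split[of "s j" "k + int j"] by auto
    from someI_ex[OF this] have "\<not> fine (s (Suc j)) (k + int j + 1)" using sS[of j] by simp
    moreover have "k + int j + 1 = k + int (Suc j)" by simp
    ultimately have nfs: "\<not> fine (s (Suc j)) (k + int (Suc j))" by metis
    have "\<exists>g. g \<in> ball (s (Suc j)) (k + int (Suc j)) \<and> \<not> fine g (k + int (Suc j) + 1)"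
      using nfs split[of "s (Suc j)" "k + int (Suc j)"] by auto
    from someI_ex[OF this] have "s (Suc (Suc j)) \<in> ball (s (Suc j)) (k + int (Suc j))"
      using sS[of "Suc j"] by simp
    then show ?case using nfs by simp
  qed
  obtain L where L: "\<forall>j. L \<in> ball (s j) (k + int j)" using seq_limit[of s k] inv by blast
  obtain m where m: "P L m" using loc by blast
  define j where "j = nat (m - k)"
  have jm: "m \<le> k + int j" unfolding j_def by simp
  have "fine (s j) (k + int j)" unfolding fine_def
  proof (intro exI[of _ "k + int j"] conjI ballI)
    fix b assume b: "b \<in> ball (s j) (k + int j)"
    have "b \<in> ball L (k + int j)" using b L ball_disj[of L "s j" "k + int j" L] by simp
    then have "b \<in> ball L m" using ball_mono[OF jm] by blast
    then show "P b (k + int j)" using mono[OF m _ jm] by blast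
  qed simp
  then show False using inv by blast
qed

lemma uconst_from_ball:
  assumes h: "\<forall>b\<in>ball 0 K. \<forall>y\<in>ball b M. f y = f b" and s: "\<And>y. f y \<noteq> 0 \<Longrightarrow> y \<in> ball 0 K"
  shows "uconst f M"
  unfolding uconst_def
proof (intro allI ballI)
  fix a y assume y: "y \<in> ball a M"
  show "f y = f a"
  proof (cases "a \<in> ball 0 K")
    case True then show ?thesis using h y by blast
  next
    case False
    show ?thesis
    proof (cases "y \<in> ball 0 K")
      case True
      have "a \<in> ball y M" using y ball_sym by blast
      then show ?thesis using h True by metis
    next
      case False
      then show ?thesis using s \<open>a \<notin> ball 0 K\<close> by metis
    qed
  qed
qed

lemma SF_uconst: assumes "f \<in> SFn" shows "\<exists>K M. K \<le> M \<and> M \<ge> M0 \<and> uconst f M \<and> (\<forall>y. f y \<noteq> 0 \<longrightarrow> y \<in> ball 0 K)"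
proof -
  obtain K where K: "\<And>y. f y \<noteq> 0 \<Longrightarrow> y \<in> ball 0 K" using SF_bsupp[OF assms] unfolding bsupp_ball by blast
  define P where "P = (\<lambda>a k. \<forall>y\<in>ball a k. f y = f a)"
  have mono: "P b k'" if "P a k" "b \<in> ball a k" "k \<le> k'" for a k b k'
    unfolding P_def
  proof
    fix y assume y: "y \<in> ball b k'"
    have "ball b k' \<subseteq> ball a k" using ball_sub[OF that(2,3)] .
    then have "f y = f a" using y that(1) unfolding P_def by blast
    moreover have "f b = f a" using that(1,2) unfolding P_def by blast
    ultimately show "f y = f b" by simp
  qed
  have loc: "\<exists>k. P x k" for x using lcD[OF SF_lc[OF assms]] unfolding P_def by blast
  have "\<exists>M\<ge>K. \<forall>b\<in>ball 0 K. P b M"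
    apply (rule bisect[where P=P])
     apply (rule mono; assumption)
    apply (rule loc)
    done
  then obtain M where M: "M \<ge> K" "\<forall>b\<in>ball 0 K. P b M" by blast
  have "uconst f M" using uconst_from_ball[of K M f] M(2) K unfolding P_def by blast
  then have "uconst f (max M M0)" by (rule uconst_mono) simp
  moreover have "K \<le> max M M0" using M(1) by simp
  ultimately show ?thesis using K by (intro exI[of _ K] exI[of _ "max M M0"]) auto
qed

lemma not_suppd: "x \<notin> suppd av v \<Longrightarrow> \<exists>k. \<forall>\<psi>\<in>SFn. closureF av {y. \<psi> y \<noteq> 0} \<subseteq> ball x k \<longrightarrow> v \<psi> = 0"
proof -
  assume "x \<notin> suppd av v"
  then obtain V where V: "openF av V" "x \<in> V" "\<forall>\<phi>\<in>SFn. closureF av {y. \<phi> y \<noteq> 0} \<subseteq> V \<longrightarrow> v \<phi> = 0"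
    unfolding suppd_def by blast
  obtain k where "ball x k \<subseteq> V" using open_has_ball[OF V(1,2)] by blast
  then show ?thesis using V(3) by blast
qed

lemma supp_vanish:
  assumes d: "distn v" and g: "g \<in> SFn" and U: "openF av U" "suppd av v \<subseteq> U" and gU: "\<forall>x\<in>U. g x = 0"
  shows "v g = 0"
proof -
  obtain K where K: "\<And>y. g y \<noteq> 0 \<Longrightarrow> y \<in> ball 0 K" using SF_bsupp[OF g] unfolding bsupp_ball by blast
  define P where "P = (\<lambda>a k. (\<forall>y\<in>ball a k. g y = g a) \<and>
     (g a = 0 \<or> (\<forall>\<psi>\<in>SFn. closureF av {x. \<psi> x \<noteq> 0} \<subseteq> ball a k \<longrightarrow> v \<psi> = 0)))"
  have mono: "P b k'" if "P a k" "b \<in> ball a k" "k \<le> k'" for a k b k'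
  proof -
    have sub: "ball b k' \<subseteq> ball a k" using ball_sub[OF that(2,3)] .
    have ga: "\<forall>y\<in>ball a k. g y = g a" using that(1) unfolding P_def by blast
    then have gb: "g b = g a" using that(2) by blast
    have 1: "\<forall>y\<in>ball b k'. g y = g b"
    proof
      fix y assume "y \<in> ball b k'"
      then have "y \<in> ball a k" using sub by blast
      then have "g y = g a" using ga by (rule bspec[rotated])
      then show "g y = g b" using gb by simp
    qed
    have "g a = 0 \<or> (\<forall>\<psi>\<in>SFn. closureF av {x. \<psi> x \<noteq> 0} \<subseteq> ball a k \<longrightarrow> v \<psi> = 0)"
      using that(1) unfolding P_def by blast
    then have "g b = 0 \<or> (\<forall>\<psi>\<in>SFn. closureF av {x. \<psi> x \<noteq> 0} \<subseteq> ball b k' \<longrightarrow> v \<psi> = 0)"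
    proof
      assume "g a = 0" then show ?thesis using gb by simp
    next
      assume "\<forall>\<psi>\<in>SFn. closureF av {x. \<psi> x \<noteq> 0} \<subseteq> ball a k \<longrightarrow> v \<psi> = 0"
      then show ?thesis using sub by blast
    qed
    then show ?thesis using 1 unfolding P_def by blast
  qed
  have loc: "\<exists>k. P x k" for x
  proof -
    obtain k1 where k1: "\<forall>y\<in>ball x k1. g y = g x" using lcD[OF SF_lc[OF g]] by blast
    show ?thesis
    proof (cases "g x = 0")
      case True then show ?thesis using k1 unfolding P_def by blast
    next
      case False
      then have "x \<notin> U" using gU by blast
      then have "x \<notin> suppd av v" using U(2) by blast
      then obtain k2 where k2: "\<forall>\<psi>\<in>SFn. closureF av {y. \<psi> y \<noteq> 0} \<subseteq> ball x k2 \<longrightarrow> v \<psi> = 0"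
        using not_suppd by blast
      have s1: "ball x (max k1 k2) \<subseteq> ball x k1" by (rule ball_mono) simp
      have s2: "ball x (max k1 k2) \<subseteq> ball x k2" by (rule ball_mono) simp
      have "P x (max k1 k2)" unfolding P_def using k1 k2 s1 s2 by blast
      then show ?thesis by blast
    qed
  qed
  have "\<exists>M\<ge>K. \<forall>b\<in>ball 0 K. P b M"
    apply (rule bisect[where P=P])
     apply (rule mono; assumption)
    apply (rule loc)
    done
  then obtain M where M: "M \<ge> K" "\<forall>b\<in>ball 0 K. P b M" by blast
  have uc: "uconst g M" using uconst_from_ball[of K M g] M(2) K unfolding P_def by blast
  have "v g = v (\<lambda>y. \<Sum>h\<in>grid 0 K M. g h * ind (ball h M) y)"
    using decomp_fun[OF M(1) uc K] by simp
  also have "\<dots> = (\<Sum>h\<in>grid 0 K M. v (\<lambda>y. g h * ind (ball h M) y))"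
    by (rule d_sum[OF d grid_finite]) (rule SF_cmult[OF SF_ind_ball])
  also have "\<dots> = (\<Sum>h\<in>grid 0 K M. g h * v (ind (ball h M)))"
    by (rule sum.cong) (simp_all add: d_cmult[OF d SF_ind_ball])
  also have "\<dots> = 0"
  proof (rule sum.neutral, rule ballI)
    fix h assume h: "h \<in> grid 0 K M"
    then have "P h M" using M(2) grid_sub by blast
    then have "g h = 0 \<or> v (ind (ball h M)) = 0"
      unfolding P_def using SF_ind_ball supp_ind_ball by (metis order.refl)
    then show "g h * v (ind (ball h M)) = 0" by auto
  qed
  finally show ?thesis .
qed

lemma distn_mult: assumes d: "distn v" and f: "f \<in> SFn" shows "distn (mult_d f v)"
  unfolding distribution_def mult_d_def
proof (intro conjI ballI allI)
  fix \<phi> \<psi> assume p: "\<phi> \<in> SFn" "\<psi> \<in> SFn"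
  have "v (\<lambda>y. f y * (\<phi> y + \<psi> y)) = v (\<lambda>y. f y * \<phi> y + f y * \<psi> y)" by (simp add: distrib_left)
  also have "\<dots> = v (\<lambda>y. f y * \<phi> y) + v (\<lambda>y. f y * \<psi> y)"
    by (rule d_add[OF d]) (rule SF_mult2[OF p(1) SF_lc[OF f]], rule SF_mult2[OF p(2) SF_lc[OF f]])
  finally show "v (\<lambda>y. f y * (\<phi> y + \<psi> y)) = v (\<lambda>y. f y * \<phi> y) + v (\<lambda>y. f y * \<psi> y)" .
next
  fix \<phi> c assume p: "\<phi> \<in> SFn"
  have "v (\<lambda>y. f y * (c * \<phi> y)) = v (\<lambda>y. c * (f y * \<phi> y))" by (simp add: mult.left_commute)
  also have "\<dots> = c * v (\<lambda>y. f y * \<phi> y)" by (rule d_cmult[OF d SF_mult2[OF p SF_lc[OF f]]])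
  finally show "v (\<lambda>y. f y * (c * \<phi> y)) = c * v (\<lambda>y. f y * \<phi> y)" .
qed

lemma suppd_mult_sub: assumes d: "distn v" and K: "\<And>y. f y \<noteq> 0 \<Longrightarrow> y \<in> ball 0 K"
  shows "suppd av (mult_d f v) \<subseteq> ball 0 K"
proof
  fix x assume x: "x \<in> suppd av (mult_d f v)"
  show "x \<in> ball 0 K"
  proof (rule ccontr)
    assume nx: "x \<notin> ball 0 K"
    have "openF av (ball x K)" "x \<in> ball x K" by (simp_all add: openF_ball)
    then obtain \<psi> where \<psi>: "\<psi> \<in> SFn" "closureF av {y. \<psi> y \<noteq> 0} \<subseteq> ball x K" "mult_d f v \<psi> \<noteq> 0"
      using x unfolding suppd_def by blast
    have "\<forall>y. f y * \<psi> y = 0"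
    proof
      fix y
      show "f y * \<psi> y = 0"
      proof (cases "\<psi> y = 0")
        case False
        then have "y \<in> {y. \<psi> y \<noteq> 0}" by simp
        then have "y \<in> closureF av {y. \<psi> y \<noteq> 0}" using closureF_sub by (rule subsetD[rotated])
        then have "y \<in> ball x K" using \<psi>(2) by (rule subsetD[rotated])
        then have "y \<notin> ball 0 K"
        proof -
          assume yx: "y \<in> ball x K"
          show "y \<notin> ball 0 K"
          proof
            assume "y \<in> ball 0 K"
            then have "ball 0 K = ball x K" using yx ball_disj by blast
            then show False using nx by simp
          qed
        qed
        then show ?thesis using K by auto
      qed simp
    qed
    then have "mult_d f v \<psi> = 0" unfolding mult_d_def using d_eq_zero[OF d, of "\<lambda>y. f y * \<psi> y"] by simp
    then show False using \<psi>(3) by simp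
  qed
qed

lemma FTcs_mult:
  assumes d: "distn v" and f: "f \<in> SFn"
  shows "FTcs av \<chi> (mult_d f v) \<eta> = v (\<lambda>x. f x * ee \<eta> x)"
proof -
  obtain K where K: "\<And>y. f y \<noteq> 0 \<Longrightarrow> y \<in> ball 0 K" using SF_bsupp[OF f] unfolding bsupp_ball by blast
  define Q where "Q = (\<lambda>\<rho>. \<rho> \<in> SFn \<and> (\<exists>U. openF av U \<and> suppd av (mult_d f v) \<subseteq> U \<and> (\<forall>x\<in>U. \<rho> x = 1)))"
  have "Q (ind (ball 0 K))" unfolding Q_def
  proof (intro conjI exI[of _ "ball 0 K"])
    show "suppd av (mult_d f v) \<subseteq> ball 0 K" by (rule suppd_mult_sub[OF d K])
  qed (auto simp: ind_def SF_ind_ball openF_ball)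
  then have "Q (SOME \<rho>. Q \<rho>)" by (metis someI)
  then obtain \<rho> U where \<rho>: "\<rho> = (SOME \<rho>. Q \<rho>)" "\<rho> \<in> SFn" "openF av U" "suppd av (mult_d f v) \<subseteq> U" "\<forall>x\<in>U. \<rho> x = 1"
    unfolding Q_def by blast
  have ft: "FTcs av \<chi> (mult_d f v) \<eta> = v (\<lambda>y. f y * (\<rho> y * ee \<eta> y))"
    unfolding FTcs_def cs_ext_def mult_d_def ee_def Let_def \<rho>(1) Q_def by simp
  define G where "G = (\<lambda>y. ind (ball 0 K) y * ((\<rho> y - 1) * ee \<eta> y))"
  have G: "G \<in> SFn" unfolding G_def
    by (rule SF_mult[OF SF_ind_ball]) (intro lc_mult lc_ee lc_add[of \<rho> "\<lambda>y. -1", simplified] SF_lc[OF \<rho>(2)] lc_const)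
  have "mult_d f v G = 0"
    by (rule supp_vanish[OF distn_mult[OF d f] G \<rho>(3,4)]) (simp add: G_def \<rho>(5))
  then have z: "v (\<lambda>y. f y * G y) = 0" unfolding mult_d_def .
  have fG: "(\<lambda>y. f y * G y) = (\<lambda>y. f y * (\<rho> y * ee \<eta> y) - f y * ee \<eta> y)"
  proof
    fix y show "f y * G y = f y * (\<rho> y * ee \<eta> y) - f y * ee \<eta> y"
      using K[of y] unfolding G_def by (cases "f y = 0") (auto simp: ind_def algebra_simps)
  qed
  have s1: "(\<lambda>y. f y * (\<rho> y * ee \<eta> y)) \<in> SFn"
    by (rule SF_mult[OF f]) (intro lc_mult lc_ee SF_lc[OF \<rho>(2)])
  have s2: "(\<lambda>y. f y * ee \<eta> y) \<in> SFn" by (rule SF_mult[OF f lc_ee])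
  have "v (\<lambda>y. f y * (\<rho> y * ee \<eta> y)) - v (\<lambda>y. f y * ee \<eta> y) = 0"
    using z unfolding fG d_diff[OF d s1 s2] .
  then show ?thesis using ft by simp
qed

end


context padic begin

section \<open>Fourier transform of balls\<close>

lemma rad_nz[simp]: "rad k \<noteq> 0" using radpos[of k] by linarith

lemma FT_eq: "FT I \<chi> \<phi> y = I (\<lambda>x. \<phi> x * ee y x)"
  unfolding FT_def ee_def by simp

lemma ee_one_on_ball: "x \<in> ball 0 M \<Longrightarrow> nrm av \<xi> \<le> rad (- M) \<Longrightarrow> ee \<xi> x = 1"
proof -
  assume x: "x \<in> ball 0 M" and xi: "nrm av \<xi> \<le> rad (- M)"
  have "nrm av x * nrm av \<xi> \<le> rad M * rad (- M)"
    using x xi unfolding ball0 by (intro mult_mono) auto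
  also have "\<dots> = 1" by (simp add: rad_minus)
  finally show ?thesis by (rule ee_small2)
qed

lemma I_BC0: "I (BC 0 M \<xi>) = (if nrm av \<xi> \<le> rad (- M) then cI M else 0)"
proof (cases "nrm av \<xi> \<le> rad (- M)")
  case True
  have "BC 0 M \<xi> = ind (ball 0 M)"
  proof
    fix x show "BC 0 M \<xi> x = ind (ball 0 M) x"
      unfolding BC_def using ee_one_on_ball[OF _ True, of x] by (simp add: ind_def)
  qed
  then show ?thesis using True by (simp add: cI_def)
next
  case False
  obtain i where i: "nrm av \<xi> = av (\<xi> i)" using nrm_attained by blast
  have gt: "av (\<xi> i) > rad (- M)" using False i by simp
  then have ge: "av (\<xi> i) \<ge> rad (- M - 1)" by (rule av_gt_rad)
  have xi0: "\<xi> i \<noteq> 0" using gt by (metis av0 radpos not_less_iff_gr_or_eq)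
  define bi where "bi = inverse w * inverse (\<xi> i)"
  define b :: "'n \<Rightarrow> 'a" where "b = (\<lambda>j. if j = i then bi else 0)"
  have avbi: "av bi = rad (- 1) / av (\<xi> i)"
    unfolding bi_def by (simp add: avmult avinv rad_minus rad1 divide_inverse)
  have "av (\<xi> i) > 0" using gt radpos[of "- M"] by linarith
  then have "0 < av (\<xi> i) * rad (- M - 1)" by simp
  then have "rad (- 1) / av (\<xi> i) \<le> rad (- 1) / rad (- M - 1)"
    using ge by (intro divide_left_mono) auto
  also have "\<dots> = rad M" by (simp add: rad_diff[symmetric])
  finally have bi_le: "av bi \<le> rad M" using avbi by simp
  have "nrm av b \<le> rad M" unfolding nrm_le_iff b_def using bi_le by auto
  then have b: "b \<in> ball 0 M" unfolding ball0 .
  have db: "dotp b \<xi> = inverse w"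
  proof -
    have "dotp b \<xi> = (\<Sum>j\<in>UNIV. if j = i then bi * \<xi> i else 0)"
      unfolding dotp_def b_def by (rule sum.cong) auto
    also have "\<dots> = bi * \<xi> i" by simp
    finally show ?thesis unfolding bi_def using xi0 by simp
  qed
  have eb: "ee \<xi> b \<noteq> 1"
  proof
    assume "ee \<xi> b = 1"
    then have "av (- dotp b \<xi>) \<le> 1" unfolding ee_def chi_one .
    then have "inverse (av w) \<le> 1" unfolding db avneg avinv .
    then show False using avw1 avwpos by (simp add: field_simps)
  qed
  have tr: "(\<lambda>x. BC 0 M \<xi> (x + b)) = (\<lambda>x. ee \<xi> b * BC 0 M \<xi> x)"
  proof
    fix x
    have "x + b \<in> ball 0 M \<longleftrightarrow> x \<in> ball 0 M"
    proof
      assume "x + b \<in> ball 0 M"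
      then have "nrm av (x + b + - b) \<le> rad M" using nrm_ultra[of "x + b" "-b"] b unfolding ball0 by simp
      then show "x \<in> ball 0 M" unfolding ball0 by simp
    next
      assume "x \<in> ball 0 M"
      then show "x + b \<in> ball 0 M" using nrm_ultra[of x b] b unfolding ball0 by simp
    qed
    then show "BC 0 M \<xi> (x + b) = ee \<xi> b * BC 0 M \<xi> x"
      unfolding BC_def ee_addx by (simp add: ind_def)
  qed
  have "I (BC 0 M \<xi>) = ee \<xi> b * I (BC 0 M \<xi>)"
    using I_transl[OF SF_BC, of 0 M \<xi> b] I_cmult[OF SF_BC, of "ee \<xi> b" 0 M \<xi>] tr by simp
  then have "(ee \<xi> b - 1) * I (BC 0 M \<xi>) = 0" by (simp add: algebra_simps)
  then show ?thesis using eb False by simp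
qed

lemma FT_BC: "FT I \<chi> (BC a k \<eta>) y = cI k * ee \<eta> a * BC (- \<eta>) (- k) a y"
proof -
  have "FT I \<chi> (BC a k \<eta>) y = I (\<lambda>x. BC a k \<eta> x * ee y x)" by (rule FT_eq)
  also have "\<dots> = I (\<lambda>x. BC a k (\<eta> + y) x)"
    unfolding BC_def by (simp add: ee_add mult.assoc)
  also have "\<dots> = I (\<lambda>x. BC a k (\<eta> + y) (x + a))" by (rule I_transl[OF SF_BC, symmetric])
  also have "(\<lambda>x. BC a k (\<eta> + y) (x + a)) = (\<lambda>x. ee (\<eta> + y) a * BC 0 k (\<eta> + y) x)"
  proof
    fix x
    have "x + a \<in> ball a k \<longleftrightarrow> x \<in> ball 0 k" using ball_transl[of x a 0 k] by simp
    then show "BC a k (\<eta> + y) (x + a) = ee (\<eta> + y) a * BC 0 k (\<eta> + y) x"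
      unfolding BC_def ee_addx by (simp add: ind_def)
  qed
  also have "I \<dots> = ee (\<eta> + y) a * I (BC 0 k (\<eta> + y))" by (rule I_cmult[OF SF_BC])
  also have "\<dots> = ee (\<eta> + y) a * (if nrm av (\<eta> + y) \<le> rad (- k) then cI k else 0)" by (simp add: I_BC0)
  also have "\<dots> = cI k * ee \<eta> a * BC (- \<eta>) (- k) a y"
  proof -
    have "y \<in> ball (- \<eta>) (- k) \<longleftrightarrow> nrm av (\<eta> + y) \<le> rad (- k)" unfolding mem_ball by (simp add: add.commute)
    then show ?thesis unfolding BC_def ee_add by (auto simp: ind_def ee_comm[of a y])
  qed
  finally show ?thesis .
qed

lemma FT_ind_ball: "FT I \<chi> (ind (ball a k)) y = cI k * ee y a * ind (ball 0 (- k)) y"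
  using FT_BC[of a k 0 y] unfolding BC_zero by (simp add: BC_def ee_comm)

lemma cI_inv: "cI k * cI (- k) = 1"
proof -
  have f: "FT I \<chi> (ind (ball 0 k)) = (\<lambda>y. cI k * ind (ball 0 (- k)) y)"
    using FT_ind_ball[of 0 k] by auto
  have "FT I \<chi> (FT I \<chi> (ind (ball 0 k))) 0 = ind (ball 0 k) (- 0)" by (rule I_inv[OF SF_ind_ball])
  then have "FT I \<chi> (\<lambda>y. cI k * ind (ball 0 (- k)) y) 0 = 1" unfolding f by (simp add: ind_def)
  moreover have "FT I \<chi> (\<lambda>y. cI k * ind (ball 0 (- k)) y) 0 = cI k * cI (- k)"
    unfolding FT_eq by (simp add: I_cmult[OF SF_ind_ball] cI_def)
  ultimately show ?thesis by simp
qed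

lemma cI_nz[simp]: "cI k \<noteq> 0" using cI_inv[of k] by auto

lemma FT_decomp:
  assumes f: "f \<in> SFn" and KM: "K \<le> M" and u: "uconst f M" and s: "\<And>y. f y \<noteq> 0 \<Longrightarrow> y \<in> ball 0 K"
  shows "FT I \<chi> f = (\<lambda>y. \<Sum>g\<in>grid 0 K M. f g * cI M * BC 0 (- M) g y)"
proof
  fix y
  have "FT I \<chi> f y = I (\<lambda>x. \<Sum>g\<in>grid 0 K M. f g * BC g M y x)"
  proof -
    have "(\<lambda>x. f x * ee y x) = (\<lambda>x. \<Sum>g\<in>grid 0 K M. f g * BC g M y x)"
    proof
      fix x
      have e: "f x = (\<Sum>g\<in>grid 0 K M. f g * ind (ball g M) x)" by (rule decomp[OF KM u s])
      have "f x * ee y x = (\<Sum>g\<in>grid 0 K M. f g * ind (ball g M) x) * ee y x"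
        by (simp only: e)
      then show "f x * ee y x = (\<Sum>g\<in>grid 0 K M. f g * BC g M y x)"
        unfolding BC_def by (simp add: sum_distrib_right mult.assoc)
    qed
    then show ?thesis unfolding FT_eq by simp
  qed
  also have "\<dots> = (\<Sum>g\<in>grid 0 K M. I (\<lambda>x. f g * BC g M y x))"
    by (rule d_sum[OF I_dist grid_finite]) (rule SF_cmult[OF SF_BC])
  also have "\<dots> = (\<Sum>g\<in>grid 0 K M. f g * cI M * BC 0 (- M) g y)"
  proof (rule sum.cong)
    fix g
    have "I (\<lambda>x. f g * BC g M y x) = f g * I (BC g M y)" by (rule I_cmult[OF SF_BC])
    also have "I (BC g M y) = FT I \<chi> (ind (ball g M)) y"
      unfolding FT_eq BC_def by simp
    also have "\<dots> = cI M * BC 0 (- M) g y"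
      unfolding FT_ind_ball BC_def by (simp add: ee_comm mult.commute)
    finally show "I (\<lambda>x. f g * BC g M y x) = f g * cI M * BC 0 (- M) g y" by (simp add: mult.assoc)
  qed simp
  finally show "FT I \<chi> f y = (\<Sum>g\<in>grid 0 K M. f g * cI M * BC 0 (- M) g y)" .
qed

lemma FT_SF: assumes f: "f \<in> SFn" shows "FT I \<chi> f \<in> SFn"
proof -
  obtain K M where KM: "K \<le> M" "uconst f M" "\<forall>y. f y \<noteq> 0 \<longrightarrow> y \<in> ball 0 K"
    using SF_uconst[OF f, of 0] by blast
  have s: "\<And>y. f y \<noteq> 0 \<Longrightarrow> y \<in> ball 0 K" using KM(3) by blast
  have "(\<lambda>y. \<Sum>g\<in>grid 0 K M. f g * cI M * BC 0 (- M) g y) \<in> SFn"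
    by (intro SF_sum grid_finite SF_cmult SF_BC)
  then show ?thesis using FT_decomp[OF f KM(1,2) s] by simp
qed

lemma FT_add: "f \<in> SFn \<Longrightarrow> g \<in> SFn \<Longrightarrow> FT I \<chi> (\<lambda>x. f x + g x) = (\<lambda>y. FT I \<chi> f y + FT I \<chi> g y)"
proof
  fix y assume f: "f \<in> SFn" and g: "g \<in> SFn"
  have "FT I \<chi> (\<lambda>x. f x + g x) y = I (\<lambda>x. f x * ee y x + g x * ee y x)"
    unfolding FT_eq by (simp add: distrib_right)
  also have "\<dots> = FT I \<chi> f y + FT I \<chi> g y"
    unfolding FT_eq by (rule I_add) (simp_all add: SF_mult[OF f lc_ee] SF_mult[OF g lc_ee])
  finally show "FT I \<chi> (\<lambda>x. f x + g x) y = FT I \<chi> f y + FT I \<chi> g y" .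
qed

lemma FT_cmult: "f \<in> SFn \<Longrightarrow> FT I \<chi> (\<lambda>x. c * f x) = (\<lambda>y. c * FT I \<chi> f y)"
proof
  fix y assume f: "f \<in> SFn"
  have "FT I \<chi> (\<lambda>x. c * f x) y = I (\<lambda>x. c * (f x * ee y x))"
    unfolding FT_eq by (simp add: mult.assoc)
  also have "\<dots> = c * FT I \<chi> f y" unfolding FT_eq by (rule I_cmult) (rule SF_mult[OF f lc_ee])
  finally show "FT I \<chi> (\<lambda>x. c * f x) y = c * FT I \<chi> f y" .
qed

lemma FTd_dist: assumes d: "distn v" shows "distn (FTd I \<chi> v)"
  unfolding distribution_def FTd_def
proof (intro conjI ballI allI)
  fix f g assume f: "f \<in> SFn" and g: "g \<in> SFn"
  show "v (FT I \<chi> (\<lambda>x. f x + g x)) = v (FT I \<chi> f) + v (FT I \<chi> g)"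
    unfolding FT_add[OF f g] by (rule d_add[OF d FT_SF[OF f] FT_SF[OF g]])
next
  fix f c assume f: "f \<in> SFn"
  show "v (FT I \<chi> (\<lambda>x. c * f x)) = c * v (FT I \<chi> f)"
    unfolding FT_cmult[OF f] by (rule d_cmult[OF d FT_SF[OF f]])
qed

lemma FTd_BC: "distn v \<Longrightarrow> FTd I \<chi> v (BC a k \<eta>) = cI k * ee \<eta> a * v (BC (- \<eta>) (- k) a)"
proof -
  assume d: "distn v"
  have "FT I \<chi> (BC a k \<eta>) = (\<lambda>y. (cI k * ee \<eta> a) * BC (- \<eta>) (- k) a y)"
    using FT_BC by auto
  then show ?thesis unfolding FTd_def using d_cmult[OF d SF_BC] by simp
qed

section \<open>Fubini\<close>

lemma fubini:
  assumes d: "distn v" and KM: "K \<le> M"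
    and h1: "\<And>\<theta>. (\<lambda>y. h y \<theta>) \<in> SFn" and h2: "\<And>y. uconst (h y) M"
    and h3: "\<And>y \<theta>. h y \<theta> \<noteq> 0 \<Longrightarrow> \<theta> \<in> ball 0 K"
  shows "v (\<lambda>y. I (h y)) = I (\<lambda>\<theta>. v (\<lambda>y. h y \<theta>))"
proof -
  have "v (\<lambda>y. I (h y)) = v (\<lambda>y. cI M * (\<Sum>g\<in>grid 0 K M. h y g))"
    using I_sum[OF KM h2 h3] by simp
  also have "\<dots> = cI M * v (\<lambda>y. \<Sum>g\<in>grid 0 K M. h y g)"
    by (rule d_cmult[OF d]) (rule SF_sum[OF grid_finite h1])
  also have "\<dots> = cI M * (\<Sum>g\<in>grid 0 K M. v (\<lambda>y. h y g))"
    by (simp add: d_sum[OF d grid_finite h1])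
  also have "\<dots> = I (\<lambda>\<theta>. v (\<lambda>y. h y \<theta>))"
  proof -
    have u: "uconst (\<lambda>\<theta>. v (\<lambda>y. h y \<theta>)) M"
      unfolding uconst_def
    proof (intro allI ballI)
      fix a t assume t: "t \<in> ball a M"
      have "(\<lambda>y. h y t) = (\<lambda>y. h y a)" using uconstD[OF h2 t] by simp
      then show "v (\<lambda>y. h y t) = v (\<lambda>y. h y a)" by simp
    qed
    have z: "t \<in> ball 0 K" if "v (\<lambda>y. h y t) \<noteq> 0" for t
    proof (rule ccontr)
      assume "t \<notin> ball 0 K"
      then have "\<forall>y. h y t = 0" using h3 by metis
      then have "v (\<lambda>y. h y t) = 0" using d_eq_zero[OF d, of "\<lambda>y. h y t"] by simp
      then show False using that by simp
    qed
    show ?thesis using I_sum[OF KM u z] by simp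
  qed
  finally show ?thesis .
qed

lemma sum_nz: assumes "(\<Sum>g\<in>A. f g) \<noteq> 0" shows "\<exists>g\<in>A. f g \<noteq> (0::complex)"
proof (rule ccontr)
  assume "\<not> (\<exists>g\<in>A. f g \<noteq> 0)"
  then have "\<forall>g\<in>A. f g = 0" by blast
  then have "(\<Sum>g\<in>A. f g) = 0" by (rule sum.neutral)
  then show False using assms by simp
qed

lemma suppd_balls: assumes d: "distn v"
  shows "x \<in> suppd av v \<longleftrightarrow> (\<forall>k. \<exists>a r. ball a r \<subseteq> ball x k \<and> v (ind (ball a r)) \<noteq> 0)"
proof
  assume x: "x \<in> suppd av v"
  show "\<forall>k. \<exists>a r. ball a r \<subseteq> ball x k \<and> v (ind (ball a r)) \<noteq> 0"
  proof
    fix k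
    obtain \<phi> where \<phi>: "\<phi> \<in> SFn" "closureF av {y. \<phi> y \<noteq> 0} \<subseteq> ball x k" "v \<phi> \<noteq> 0"
      using x openF_ball[of x k] ball_center[of x k] unfolding suppd_def mem_Collect_eq by blast
    obtain K M where KM: "K \<le> M" "M \<ge> k" "uconst \<phi> M" "\<forall>y. \<phi> y \<noteq> 0 \<longrightarrow> y \<in> ball 0 K"
      using SF_uconst[OF \<phi>(1), of k] by blast
    have s: "\<And>y. \<phi> y \<noteq> 0 \<Longrightarrow> y \<in> ball 0 K" using KM(4) by blast
    have e: "\<phi> = (\<lambda>y. \<Sum>g\<in>grid 0 K M. \<phi> g * ind (ball g M) y)" by (rule decomp_fun[OF KM(1,3) s])
    have "v \<phi> = v (\<lambda>y. \<Sum>g\<in>grid 0 K M. \<phi> g * ind (ball g M) y)" by (rule arg_cong[OF e])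
    also have "\<dots> = (\<Sum>g\<in>grid 0 K M. v (\<lambda>y. \<phi> g * ind (ball g M) y))"
      by (rule d_sum[OF d grid_finite]) (rule SF_cmult[OF SF_ind_ball])
    also have "\<dots> = (\<Sum>g\<in>grid 0 K M. \<phi> g * v (ind (ball g M)))"
      by (rule sum.cong) (simp_all add: d_cmult[OF d SF_ind_ball])
    finally have "(\<Sum>g\<in>grid 0 K M. \<phi> g * v (ind (ball g M))) \<noteq> 0" using \<phi>(3) by simp
    then obtain g where g0: "g \<in> grid 0 K M" "\<phi> g * v (ind (ball g M)) \<noteq> 0" using sum_nz by blast
    then have g: "\<phi> g \<noteq> 0" "v (ind (ball g M)) \<noteq> 0" by auto
    have "g \<in> {y. \<phi> y \<noteq> 0}" using g(1) by simp
    then have "g \<in> closureF av {y. \<phi> y \<noteq> 0}" using closureF_sub by (rule subsetD[rotated])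
    then have "g \<in> ball x k" using \<phi>(2) by (rule subsetD[rotated])
    then have "ball g M \<subseteq> ball x k" using ball_sub KM(2) by blast
    then show "\<exists>a r. ball a r \<subseteq> ball x k \<and> v (ind (ball a r)) \<noteq> 0" using g(2) by blast
  qed
next
  assume h: "\<forall>k. \<exists>a r. ball a r \<subseteq> ball x k \<and> v (ind (ball a r)) \<noteq> 0"
  show "x \<in> suppd av v" unfolding suppd_def
  proof (intro CollectI allI impI)
    fix U assume U: "openF av U \<and> x \<in> U"
    then obtain k where k: "ball x k \<subseteq> U" using open_has_ball by blast
    obtain a r where ar: "ball a r \<subseteq> ball x k" "v (ind (ball a r)) \<noteq> 0" using h by blast
    show "\<exists>\<phi>\<in>SFn. closureF av {y. \<phi> y \<noteq> 0} \<subseteq> U \<and> v \<phi> \<noteq> 0"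
      using SF_ind_ball supp_ind_ball ar k by (intro bexI[of _ "ind (ball a r)"]) auto
  qed
qed

end


context padic begin

lemma Lam_nz: "c \<in> \<Lambda> \<Longrightarrow> c \<noteq> 0" using FI unfolding fin_index_subgroup_def by blast
lemma Lam_one: "1 \<in> \<Lambda>" using FI unfolding fin_index_subgroup_def by blast
lemma Lam_mult: "a \<in> \<Lambda> \<Longrightarrow> b \<in> \<Lambda> \<Longrightarrow> a * b \<in> \<Lambda>" using FI unfolding fin_index_subgroup_def by blast
lemma Lam_inv: "a \<in> \<Lambda> \<Longrightarrow> inverse a \<in> \<Lambda>" using FI unfolding fin_index_subgroup_def by blast
lemma Lam_pow: "w ^ n \<in> \<Lambda>" by (induction n) (auto intro: Lam_mult Lam_one wL)
lemma Lam_powi: "w powi j \<in> \<Lambda>"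
proof (cases "j \<ge> 0")
  case True then show ?thesis by (simp add: power_int_def Lam_pow)
next
  case False
  then have "w powi j = inverse (w ^ nat (- j))" by (simp add: power_int_def power_inverse)
  then show ?thesis using Lam_inv[OF Lam_pow] by simp
qed
lemma Lam_rad: "c \<in> \<Lambda> \<Longrightarrow> \<exists>j. av c = rad (- j)"
proof -
  assume "c \<in> \<Lambda>"
  then obtain k where "av c = rad k" using av_disc_rad Lam_nz by blast
  then show ?thesis by (intro exI[of _ "- k"]) simp
qed

definition cone :: "('n \<Rightarrow> 'a) \<Rightarrow> int \<Rightarrow> ('n \<Rightarrow> 'a) set" where
  "cone \<xi> m = {smul c y | c y. c \<in> \<Lambda> \<and> y \<in> ball \<xi> m}"

definition UNB :: "(('n \<Rightarrow> 'a) \<Rightarrow> complex) \<Rightarrow> ('n \<Rightarrow> 'a) \<Rightarrow> int \<Rightarrow> bool" where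
  "UNB f \<xi> m \<longleftrightarrow> (\<forall>C. \<exists>\<eta>\<in>cone \<xi> m. nrm av \<eta> > C \<and> f \<eta> \<noteq> 0)"

lemma coneI: "c \<in> \<Lambda> \<Longrightarrow> y \<in> ball \<xi> m \<Longrightarrow> smul c y \<in> cone \<xi> m" unfolding cone_def by blast
lemma coneE: "\<eta> \<in> cone \<xi> m \<Longrightarrow> (\<And>c y. c \<in> \<Lambda> \<Longrightarrow> y \<in> ball \<xi> m \<Longrightarrow> \<eta> = smul c y \<Longrightarrow> P) \<Longrightarrow> P"
  unfolding cone_def by blast
lemma xi_cone: "\<xi> \<in> cone \<xi> m" using coneI[OF Lam_one, of \<xi> \<xi> m] by simp
lemma cone_mono: "m \<le> m' \<Longrightarrow> cone \<xi> m' \<subseteq> cone \<xi> m"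
  unfolding cone_def using ball_mono by blast

lemma nrm_cone: "c \<in> \<Lambda> \<Longrightarrow> y \<in> ball \<xi> m \<Longrightarrow> rad m < nrm av \<xi> \<Longrightarrow> nrm av (smul c y) = av c * nrm av \<xi>"
  using ball_nrm[of y \<xi> m] nrm_smul[of c y] by simp

lemma cone_is_cone: "rad m < nrm av \<xi> \<Longrightarrow> is_cone \<Lambda> (cone \<xi> m)"
  unfolding is_cone_def
proof (intro conjI ballI subsetI)
  fix \<eta> assume m: "rad m < nrm av \<xi>" and e: "\<eta> \<in> cone \<xi> m"
  obtain c y where cy: "c \<in> \<Lambda>" "y \<in> ball \<xi> m" "\<eta> = smul c y" using e by (rule coneE)
  have "nrm av \<eta> = av c * nrm av \<xi>" using nrm_cone[OF cy(1,2) m] cy(3) by simp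
  moreover have "av c > 0" using avpos Lam_nz cy(1) by blast
  moreover have "nrm av \<xi> > 0" using m radpos[of m] by linarith
  ultimately have "nrm av \<eta> > 0" by simp
  then show "\<eta> \<in> {x. x \<noteq> 0}" by auto
next
  fix c \<eta> assume c: "c \<in> \<Lambda>" and e: "\<eta> \<in> cone \<xi> m"
  obtain c' y where cy: "c' \<in> \<Lambda>" "y \<in> ball \<xi> m" "\<eta> = smul c' y" using e by (rule coneE)
  have "smul c \<eta> = smul (c * c') y" using cy(3) smul_smul by simp
  then show "smul c \<eta> \<in> cone \<xi> m" using coneI[OF Lam_mult[OF c cy(1)] cy(2)] by simp
qed

lemma cone_open: "openF av (cone \<xi> m)"
  unfolding openF_def
proof
  fix p assume "p \<in> cone \<xi> m"
  then obtain c y where cy: "c \<in> \<Lambda>" "y \<in> ball \<xi> m" "p = smul c y" by (rule coneE)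
  have c0: "c \<noteq> 0" using Lam_nz cy(1) by blast
  have avc: "av c > 0" using avpos c0 by blast
  show "\<exists>r>0. \<forall>z. nrm av (z - p) < r \<longrightarrow> z \<in> cone \<xi> m"
  proof (intro exI[of _ "av c * rad m"] conjI allI impI)
    show "av c * rad m > 0" using avc by simp
    fix z assume z: "nrm av (z - p) < av c * rad m"
    define z' where "z' = smul (inverse c) z"
    have "smul (inverse c) p = y" using cy(3) smul_inv c0 by simp
    then have "z' - y = smul (inverse c) z - smul (inverse c) p" unfolding z'_def by simp
    also have "\<dots> = smul (inverse c) (z - p)" by (rule smul_diff)
    finally have "z' - y = smul (inverse c) (z - p)" .
    then have "nrm av (z' - y) = nrm av (z - p) / av c" by (simp add: nrm_smul avinv divide_inverse mult.commute)
    also have "\<dots> < rad m" using z avc by (simp add: divide_less_eq mult.commute)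
    finally have "z' \<in> ball y m" unfolding mem_ball by simp
    then have "z' \<in> ball \<xi> m" using ball_trans cy(2) by blast
    moreover have "z = smul c z'" unfolding z'_def by (rule smul_inv2[OF c0, symmetric])
    ultimately show "z \<in> cone \<xi> m" using coneI[OF cy(1)] by simp
  qed
qed

lemma cone_shift:
  assumes m: "rad m < nrm av \<xi>" and e: "\<eta> \<in> cone \<xi> m" and th: "nrm av \<theta> \<le> B"
    and big1: "nrm av \<eta> > nrm av \<xi> * B / rad m" and big2: "nrm av \<eta> > B"
  shows "\<eta> + \<theta> \<in> cone \<xi> m \<and> nrm av (\<eta> + \<theta>) = nrm av \<eta>"
proof
  obtain c y where cy: "c \<in> \<Lambda>" "y \<in> ball \<xi> m" "\<eta> = smul c y" using e by (rule coneE)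
  have c0: "c \<noteq> 0" using Lam_nz cy(1) by blast
  have avc: "av c > 0" using avpos c0 by blast
  have nx: "nrm av \<xi> > 0" using m radpos[of m] by linarith
  have ne: "nrm av \<eta> = av c * nrm av \<xi>" using nrm_cone[OF cy(1,2) m] cy(3) by simp
  have B0: "B \<ge> 0" using th nrm_nonneg order.trans by blast
  have "av c * nrm av \<xi> > nrm av \<xi> * B / rad m" using big1 ne by simp
  then have "av c > B / rad m" using nx by (simp add: field_simps)
  then have "av c * rad m > B" by (simp add: field_simps)
  then have q: "nrm av \<theta> < av c * rad m" using th by linarith
  define t where "t = smul (inverse c) \<theta>"
  have "nrm av t = nrm av \<theta> / av c" unfolding t_def by (simp add: nrm_smul avinv divide_inverse mult.commute)
  also have "\<dots> < rad m" using q avc by (simp add: divide_less_eq mult.commute)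
  finally have "y + t \<in> ball y m" unfolding mem_ball by simp
  then have "y + t \<in> ball \<xi> m" using ball_trans cy(2) by blast
  moreover have "smul c (y + t) = \<eta> + \<theta>" unfolding t_def cy(3) smul_add[symmetric] using smul_inv2[OF c0] by simp
  ultimately show "\<eta> + \<theta> \<in> cone \<xi> m" using coneI[OF cy(1)] by metis
  show "nrm av (\<eta> + \<theta>) = nrm av \<eta>" using nrm_ultra_eq[of \<theta> \<eta>] th big2 by simp
qed

section \<open>asymptotic cones\<close>

lemma closureF_mem: "F x \<noteq> 0 \<Longrightarrow> x \<in> closureF av {x. F x \<noteq> 0}"
proof -
  assume "F x \<noteq> 0"
  then have "x \<in> {x. F x \<noteq> 0}" by simp
  then show ?thesis using closureF_sub by (rule subsetD[rotated])
qed

lemma AC_iff: assumes xi: "\<xi> \<noteq> 0"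
  shows "\<xi> \<in> AC av \<Lambda> A \<longleftrightarrow> (\<forall>m. rad m < nrm av \<xi> \<longrightarrow> \<not> boundedF av (cone \<xi> m \<inter> A))"
proof
  assume a: "\<xi> \<in> AC av \<Lambda> A"
  show "\<forall>m. rad m < nrm av \<xi> \<longrightarrow> \<not> boundedF av (cone \<xi> m \<inter> A)"
  proof (intro allI impI notI)
    fix m assume m: "rad m < nrm av \<xi>" and b: "boundedF av (cone \<xi> m \<inter> A)"
    have "cone \<xi> m \<in> {\<Gamma>. is_cone \<Lambda> \<Gamma> \<and> openF av \<Gamma> \<and> boundedF av (\<Gamma> \<inter> A)}"
      using cone_is_cone[OF m] cone_open b by blast
    then show False using a xi_cone[of \<xi> m] unfolding AC_def by blast
  qed
next
  assume h: "\<forall>m. rad m < nrm av \<xi> \<longrightarrow> \<not> boundedF av (cone \<xi> m \<inter> A)"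
  show "\<xi> \<in> AC av \<Lambda> A" unfolding AC_def
  proof (rule DiffI)
    show "\<xi> \<in> {x. x \<noteq> 0}" using xi by simp
    show "\<xi> \<notin> \<Union> {\<Gamma>. is_cone \<Lambda> \<Gamma> \<and> openF av \<Gamma> \<and> boundedF av (\<Gamma> \<inter> A)}"
    proof
      assume "\<xi> \<in> \<Union> {\<Gamma>. is_cone \<Lambda> \<Gamma> \<and> openF av \<Gamma> \<and> boundedF av (\<Gamma> \<inter> A)}"
      then obtain \<Gamma> where G: "is_cone \<Lambda> \<Gamma>" "openF av \<Gamma>" "boundedF av (\<Gamma> \<inter> A)" "\<xi> \<in> \<Gamma>" by blast
      have nx: "nrm av \<xi> > 0" using nrm_pos xi by blast
      obtain m0 where m0: "rad m0 < nrm av \<xi>" using rad_small[OF nx] by blast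
      obtain m where m: "m \<ge> m0" "ball \<xi> m \<subseteq> \<Gamma>" using open_has_ball_ge[OF G(2,4)] by blast
      have mm: "rad m < nrm av \<xi>" using rad_mono[OF m(1)] m0 by linarith
      have "cone \<xi> m \<subseteq> \<Gamma>"
      proof
        fix \<eta> assume "\<eta> \<in> cone \<xi> m"
        then obtain c y where cy: "c \<in> \<Lambda>" "y \<in> ball \<xi> m" "\<eta> = smul c y" by (rule coneE)
        then show "\<eta> \<in> \<Gamma>" using G(1) m(2) unfolding is_cone_def by blast
      qed
      then have "boundedF av (cone \<xi> m \<inter> A)" using G(3) unfolding boundedF_def by blast
      then show False using h mm by blast
    qed
  qed
qed

lemma bounded_closure_cone:
  "boundedF av (cone \<xi> m \<inter> closureF av {x. F x \<noteq> 0}) \<longleftrightarrow> (\<exists>C. \<forall>\<eta>\<in>cone \<xi> m. F \<eta> \<noteq> 0 \<longrightarrow> nrm av \<eta> \<le> C)"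
proof
  assume "boundedF av (cone \<xi> m \<inter> closureF av {x. F x \<noteq> 0})"
  then obtain C where C: "\<forall>x\<in>cone \<xi> m \<inter> closureF av {x. F x \<noteq> 0}. nrm av x \<le> C" unfolding boundedF_def by blast
  have "\<forall>\<eta>\<in>cone \<xi> m. F \<eta> \<noteq> 0 \<longrightarrow> nrm av \<eta> \<le> C"
  proof (intro ballI impI)
    fix \<eta> assume "\<eta> \<in> cone \<xi> m" "F \<eta> \<noteq> 0"
    moreover have "\<eta> \<in> closureF av {x. F x \<noteq> 0}" using \<open>F \<eta> \<noteq> 0\<close> by (rule closureF_mem)
    ultimately show "nrm av \<eta> \<le> C" using C by blast
  qed
  then show "\<exists>C. \<forall>\<eta>\<in>cone \<xi> m. F \<eta> \<noteq> 0 \<longrightarrow> nrm av \<eta> \<le> C" by blast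
next
  assume "\<exists>C. \<forall>\<eta>\<in>cone \<xi> m. F \<eta> \<noteq> 0 \<longrightarrow> nrm av \<eta> \<le> C"
  then obtain C where C: "\<And>\<eta>. \<eta> \<in> cone \<xi> m \<Longrightarrow> F \<eta> \<noteq> 0 \<Longrightarrow> nrm av \<eta> \<le> C" by blast
  have "\<forall>p\<in>cone \<xi> m \<inter> closureF av {x. F x \<noteq> 0}. nrm av p \<le> max C 0"
  proof
    fix p assume p: "p \<in> cone \<xi> m \<inter> closureF av {x. F x \<noteq> 0}"
    show "nrm av p \<le> max C 0"
    proof (rule ccontr)
      assume np: "\<not> nrm av p \<le> max C 0"
      obtain r where r: "r > 0" "\<forall>z. nrm av (z - p) < r \<longrightarrow> z \<in> cone \<xi> m"
        using cone_open p unfolding openF_def by blast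
      have "min r (nrm av p) > 0" using r np by simp
      then obtain y where y: "F y \<noteq> 0" "nrm av (y - p) < min r (nrm av p)"
        using p unfolding closureF_def by blast
      have "y \<in> cone \<xi> m" using r y by simp
      then have "nrm av y \<le> C" using C y(1) by blast
      moreover have "nrm av y = nrm av p" using nrm_close_eq[of y p] y(2) by simp
      ultimately show False using np by simp
    qed
  qed
  then show "boundedF av (cone \<xi> m \<inter> closureF av {x. F x \<noteq> 0})" unfolding boundedF_def by blast
qed

lemma unb_iff: "\<not> boundedF av (cone \<xi> m \<inter> closureF av {x. F x \<noteq> 0}) \<longleftrightarrow> UNB F \<xi> m"
  unfolding bounded_closure_cone UNB_def by (meson not_le)

lemma AC_supp_iff: assumes "\<xi> \<noteq> 0"
  shows "\<xi> \<in> AC av \<Lambda> (suppf av F) \<longleftrightarrow> (\<forall>m. rad m < nrm av \<xi> \<longrightarrow> UNB F \<xi> m)"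
  unfolding AC_iff[OF assms] suppf_def unb_iff ..

end


context padic begin

lemma uconst_ee: "rad M * nrm av z \<le> 1 \<Longrightarrow> uconst (ee z) M"
  unfolding uconst_def
proof (intro allI ballI)
  fix a t assume h: "rad M * nrm av z \<le> 1" and t: "t \<in> ball a M"
  have "nrm av (t - a) * nrm av z \<le> rad M * nrm av z"
    using t unfolding mem_ball by (intro mult_right_mono) auto
  then have "ee z (t - a) = 1" using h by (intro ee_small2) linarith
  then show "ee z t = ee z a" using ee_addx[of z a "t - a"] by simp
qed

lemma uconst_mult: "uconst f M \<Longrightarrow> uconst g M \<Longrightarrow> uconst (\<lambda>x. f x * g x) M"
  unfolding uconst_def by simp

lemma lc_ee2: "lc (\<lambda>\<theta>. ee \<theta> y)"
proof -
  have "(\<lambda>\<theta>. ee \<theta> y) = ee y" by (rule ext) (rule ee_comm)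
  then show ?thesis using lc_ee by simp
qed

lemma uconst_const: "uconst (\<lambda>x. c) M" unfolding uconst_def by simp

section \<open>Sigma and WF via balls\<close>

lemma Sigma_mult_iff: assumes d: "distn v" and f: "f \<in> SFn" and xi: "\<xi> \<noteq> 0"
  shows "\<xi> \<in> Sigma_cs av \<Lambda> \<chi> (mult_d f v) \<longleftrightarrow> (\<forall>m. rad m < nrm av \<xi> \<longrightarrow> UNB (\<lambda>\<eta>. v (\<lambda>x. f x * ee \<eta> x)) \<xi> m)"
proof -
  have "FTcs av \<chi> (mult_d f v) = (\<lambda>\<eta>. v (\<lambda>x. f x * ee \<eta> x))"
    using FTcs_mult[OF d f] by (rule ext)
  then show ?thesis unfolding Sigma_cs_def using AC_supp_iff[OF xi] by simp
qed

lemma mono_key: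
  assumes d: "distn v" and f: "f \<in> SFn" and fx: "f x \<noteq> 0" and m: "rad m < nrm av \<xi>"
    and hyp: "\<And>k. UNB (\<lambda>\<eta>. v (BC x k \<eta>)) \<xi> m"
  shows "UNB (\<lambda>\<eta>. v (\<lambda>y. f y * ee \<eta> y)) \<xi> m"
proof (rule ccontr)
  assume "\<not> UNB (\<lambda>\<eta>. v (\<lambda>y. f y * ee \<eta> y)) \<xi> m"
  then obtain C where C: "\<And>\<eta>. \<eta> \<in> cone \<xi> m \<Longrightarrow> nrm av \<eta> > C \<Longrightarrow> v (\<lambda>y. f y * ee \<eta> y) = 0"
    unfolding UNB_def by (meson not_le)
  obtain k where k: "\<forall>y\<in>ball x k. f y = f x" using lcD[OF SF_lc[OF f]] by blast
  obtain Kf where Kf: "\<And>y. f y \<noteq> 0 \<Longrightarrow> y \<in> ball 0 Kf" using SF_bsupp[OF f] unfolding bsupp_ball by blast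
  define R where "R = max (rad Kf) (nrm av x)"
  have R0: "R \<ge> 0" unfolding R_def by (meson le_max_iff_disj radnn)
  obtain M where M: "M \<ge> - k" "rad M < inverse (R + 1)" using rad_small_ge[of "inverse (R + 1)" "- k"] R0 by auto
  have MR: "rad M * R \<le> 1"
  proof -
    have "rad M * R \<le> inverse (R + 1) * R" using M(2) R0 by (intro mult_right_mono) auto
    also have "\<dots> \<le> 1" using R0 by (simp add: field_simps)
    finally show ?thesis .
  qed
  define B where "B = rad (- k)"
  define C' where "C' = max (max C B) (nrm av \<xi> * B / rad m)"
  obtain \<eta> where \<eta>: "\<eta> \<in> cone \<xi> m" "nrm av \<eta> > C'" "v (BC x k \<eta>) \<noteq> 0" using hyp[of k] unfolding UNB_def by blast
  have e1: "(\<lambda>y. f y * BC x k \<eta> y) = (\<lambda>y. f x * BC x k \<eta> y)"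
  proof
    fix y show "f y * BC x k \<eta> y = f x * BC x k \<eta> y"
    proof (cases "y \<in> ball x k")
      case True
      then have "f y = f x" using k by (rule bspec[rotated])
      then show ?thesis by simp
    next
      case False then show ?thesis unfolding BC_def ind_def by simp
    qed
  qed
  have s1: "v (\<lambda>y. f y * BC x k \<eta> y) = f x * v (BC x k \<eta>)"
    unfolding e1 by (rule d_cmult[OF d SF_BC])
  define h where "h = (\<lambda>y \<theta>. (f y * ee \<eta> y * cI k) * (ind (ball 0 (- k)) \<theta> * (ee \<theta> y * ee \<theta> (- x))))"
  have e2: "(\<lambda>y. f y * BC x k \<eta> y) = (\<lambda>y. I (h y))"
  proof
    fix y
    have "(\<lambda>\<theta>. ind (ball 0 (- k)) \<theta> * (ee \<theta> y * ee \<theta> (- x))) = (\<lambda>\<theta>. ind (ball 0 (- k)) \<theta> * ee (y - x) \<theta>)"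
      by (rule ext) (simp add: ee_comm[of _ "y - x"] ee_addx[symmetric])
    then have "I (\<lambda>\<theta>. ind (ball 0 (- k)) \<theta> * (ee \<theta> y * ee \<theta> (- x))) = FT I \<chi> (ind (ball 0 (- k))) (y - x)"
      unfolding FT_eq by simp
    also have "\<dots> = cI (- k) * ind (ball 0 k) (y - x)" unfolding FT_ind_ball by simp
    finally have a: "I (\<lambda>\<theta>. ind (ball 0 (- k)) \<theta> * (ee \<theta> y * ee \<theta> (- x))) = cI (- k) * ind (ball x k) y"
      by (simp add: ind_def mem_ball)
    have "I (h y) = (f y * ee \<eta> y * cI k) * I (\<lambda>\<theta>. ind (ball 0 (- k)) \<theta> * (ee \<theta> y * ee \<theta> (- x)))"
      unfolding h_def by (rule I_cmult) (intro SF_mult[OF SF_ind_ball] lc_mult lc_ee2)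
    also have "\<dots> = f y * BC x k \<eta> y * (cI k * cI (- k))" unfolding a BC_def by (simp add: algebra_simps)
    finally show "f y * BC x k \<eta> y = I (h y)" by (simp add: cI_inv)
  qed
  have h1: "(\<lambda>y. h y \<theta>) \<in> SFn" for \<theta>
  proof -
    have "(\<lambda>y. h y \<theta>) = (\<lambda>y. f y * (ee \<eta> y * cI k * (ind (ball 0 (- k)) \<theta> * (ee \<theta> y * ee \<theta> (- x)))))"
      unfolding h_def by (simp add: algebra_simps)
    also have "\<dots> \<in> SFn" by (rule SF_mult[OF f]) (intro lc_mult lc_ee lc_const)
    finally show ?thesis .
  qed
  have h2: "uconst (h y) M" for y
  proof (cases "f y = 0")
    case True then show ?thesis unfolding h_def by (simp add: uconst_const)
  next
    case False
    then have "y \<in> ball 0 Kf" using Kf by blast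
    then have ny: "nrm av y \<le> R" unfolding R_def ball0 by simp
    have nx: "nrm av (- x) \<le> R" unfolding R_def by simp
    have u1: "uconst (ee y) M" by (rule uconst_ee) (use MR ny in \<open>meson mult_left_mono order.trans radnn\<close>)
    have u2: "uconst (ee (- x)) M" by (rule uconst_ee) (use MR nx in \<open>meson mult_left_mono order.trans radnn\<close>)
    have "uconst (\<lambda>\<theta>. (f y * ee \<eta> y * cI k) * (ind (ball 0 (- k)) \<theta> * (ee y \<theta> * ee (- x) \<theta>))) M"
      by (intro uconst_mult uconst_const uconst_ind_ball M(1) u1 u2)
    then show ?thesis unfolding h_def by (simp add: ee_comm)
  qed
  have h3: "h y \<theta> \<noteq> 0 \<Longrightarrow> \<theta> \<in> ball 0 (- k)" for y \<theta> unfolding h_def ind_def by (cases "\<theta> \<in> ball 0 (- k)") auto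
  have fub: "v (\<lambda>y. I (h y)) = I (\<lambda>\<theta>. v (\<lambda>y. h y \<theta>))"
    by (rule fubini[OF d M(1) h1 h2 h3])
  have z: "v (\<lambda>y. h y \<theta>) = 0" for \<theta>
  proof (cases "\<theta> \<in> ball 0 (- k)")
    case False
    then have "\<forall>y. h y \<theta> = 0" unfolding h_def by (simp add: ind_def)
    then show ?thesis using d_eq_zero[OF d, of "\<lambda>y. h y \<theta>"] by simp
  next
    case True
    have hr: "(\<lambda>y. h y \<theta>) = (\<lambda>y. (cI k * ee \<theta> (- x)) * (f y * ee (\<eta> + \<theta>) y))"
      unfolding h_def using True by (auto simp: ind_def ee_add fun_eq_iff algebra_simps)
    have tb: "nrm av \<theta> \<le> B" using True unfolding B_def ball0 .
    have "nrm av \<eta> > nrm av \<xi> * B / rad m" "nrm av \<eta> > B" using \<eta>(2) unfolding C'_def by auto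
    then have sh: "\<eta> + \<theta> \<in> cone \<xi> m \<and> nrm av (\<eta> + \<theta>) = nrm av \<eta>"
      using cone_shift[OF m \<eta>(1) tb] by blast
    have "nrm av (\<eta> + \<theta>) > C" using sh \<eta>(2) unfolding C'_def by auto
    then have "v (\<lambda>y. f y * ee (\<eta> + \<theta>) y) = 0" using C sh by blast
    then show ?thesis unfolding hr by (simp add: d_cmult[OF d SF_mult[OF f lc_ee]])
  qed
  have "I (\<lambda>\<theta>. v (\<lambda>y. h y \<theta>)) = 0" using z d_zero[OF I_dist] by simp
  then have "v (\<lambda>y. f y * BC x k \<eta> y) = 0" using fub e2 by simp
  then have "f x * v (BC x k \<eta>) = 0" using s1 by simp
  then show False using fx \<eta>(3) by simp
qed

lemma WF_iff: assumes d: "distn v"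
  shows "(x, \<xi>) \<in> WF av \<Lambda> \<chi> v \<longleftrightarrow> \<xi> \<noteq> 0 \<and> (\<forall>k m. rad m < nrm av \<xi> \<longrightarrow> UNB (\<lambda>\<eta>. v (BC x k \<eta>)) \<xi> m)"
proof
  assume a: "(x, \<xi>) \<in> WF av \<Lambda> \<chi> v"
  then have xi: "\<xi> \<noteq> 0" and s: "\<xi> \<in> Sigma_at av \<Lambda> \<chi> v x" unfolding WF_def by auto
  have "\<forall>k m. rad m < nrm av \<xi> \<longrightarrow> UNB (\<lambda>\<eta>. v (BC x k \<eta>)) \<xi> m"
  proof (intro allI impI)
    fix k m assume m: "rad m < nrm av \<xi>"
    have "ind (ball x k) \<in> {\<phi> \<in> SFn. \<phi> x \<noteq> 0}" using SF_ind_ball by (simp add: ind_def)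
    then have "\<xi> \<in> Sigma_cs av \<Lambda> \<chi> (mult_d (ind (ball x k)) v)" using s unfolding Sigma_at_def by blast
    then have "UNB (\<lambda>\<eta>. v (\<lambda>y. ind (ball x k) y * ee \<eta> y)) \<xi> m"
      using Sigma_mult_iff[OF d SF_ind_ball xi] m by blast
    then show "UNB (\<lambda>\<eta>. v (BC x k \<eta>)) \<xi> m" unfolding BC_def .
  qed
  then show "\<xi> \<noteq> 0 \<and> (\<forall>k m. rad m < nrm av \<xi> \<longrightarrow> UNB (\<lambda>\<eta>. v (BC x k \<eta>)) \<xi> m)" using xi by blast
next
  assume a: "\<xi> \<noteq> 0 \<and> (\<forall>k m. rad m < nrm av \<xi> \<longrightarrow> UNB (\<lambda>\<eta>. v (BC x k \<eta>)) \<xi> m)"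
  have "\<xi> \<in> Sigma_at av \<Lambda> \<chi> v x" unfolding Sigma_at_def
  proof (rule INT_I)
    fix f assume "f \<in> {\<phi> \<in> SFn. \<phi> x \<noteq> 0}"
    then have f: "f \<in> SFn" "f x \<noteq> 0" by auto
    have xi: "\<xi> \<noteq> 0" using a by blast
    show "\<xi> \<in> Sigma_cs av \<Lambda> \<chi> (mult_d f v)"
      unfolding Sigma_mult_iff[OF d f(1) xi] using a mono_key[OF d f] by blast
  qed
  then show "(x, \<xi>) \<in> WF av \<Lambda> \<chi> v" unfolding WF_def using a by blast
qed

section \<open>zero-homogeneity\<close>

definition Zhom :: "((('n \<Rightarrow> 'a) \<Rightarrow> complex) \<Rightarrow> complex) \<Rightarrow> bool" where
  "Zhom v \<longleftrightarrow> (\<forall>a k \<eta> c j. c \<in> \<Lambda> \<longrightarrow> av c = rad (- j) \<longrightarrow>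
      (v (BC (smul c a) (k - j) (smul (inverse c) \<eta>)) = 0 \<longleftrightarrow> v (BC a k \<eta>) = 0))"

lemma ZhomD: "Zhom v \<Longrightarrow> c \<in> \<Lambda> \<Longrightarrow> av c = rad (- j) \<Longrightarrow>
      (v (BC (smul c a) (k - j) (smul (inverse c) \<eta>)) = 0 \<longleftrightarrow> v (BC a k \<eta>) = 0)"
  unfolding Zhom_def by blast

lemma BC_scale: assumes c0: "c \<noteq> 0" and ac: "av c = rad (- j)"
  shows "BC (smul c a) (k - j) (smul (inverse c) \<eta>) x = BC a k \<eta> (smul (inverse c) x)"
proof -
  have ac': "av (inverse c) = rad j" using ac by (simp add: avinv rad_minus)
  have "smul (inverse c) x \<in> ball (smul (inverse c) (smul c a)) (k - j + j) \<longleftrightarrow> x \<in> ball (smul c a) (k - j)"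
    by (rule ball_smul[OF ac'])
  moreover have "smul (inverse c) (smul c a) = a" by (rule smul_inv[OF c0])
  ultimately have b: "smul (inverse c) x \<in> ball a k \<longleftrightarrow> x \<in> ball (smul c a) (k - j)" by simp
  have e: "ee (smul (inverse c) \<eta>) x = ee \<eta> (smul (inverse c) x)"
    unfolding ee_def dotp_smul1 dotp_smul2 ..
  show ?thesis unfolding BC_def ind_def using b e by simp
qed

lemma hom_Zhom: assumes d: "distn u" and h: "homogeneous av \<Lambda> chiL u" shows "Zhom u"
  unfolding Zhom_def
proof (intro allI impI)
  fix a k \<eta> c j assume c: "c \<in> \<Lambda>" and ac: "av c = rad (- j)"
  have c0: "c \<noteq> 0" using Lam_nz c by blast
  define \<kappa> :: complex where "\<kappa> = complex_of_real (av c powi (- int (card (UNIV :: 'n set))))"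
  have k0: "\<kappa> \<noteq> 0" unfolding \<kappa>_def using avpos[OF c0] c0 by simp
  have "dil av c (BC a k \<eta>) = (\<lambda>x. \<kappa> * BC (smul c a) (k - j) (smul (inverse c) \<eta>) x)"
    unfolding dil_def \<kappa>_def using BC_scale[OF c0 ac] by simp
  then have "u (dil av c (BC a k \<eta>)) = \<kappa> * u (BC (smul c a) (k - j) (smul (inverse c) \<eta>))"
    using d_cmult[OF d SF_BC] by simp
  moreover have "u (dil av c (BC a k \<eta>)) = chiL c * u (BC a k \<eta>)"
    using h c SF_BC unfolding homogeneous_def by blast
  moreover have "chiL c \<noteq> 0" using h c unfolding homogeneous_def by blast
  ultimately show "u (BC (smul c a) (k - j) (smul (inverse c) \<eta>)) = 0 \<longleftrightarrow> u (BC a k \<eta>) = 0"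
    using k0 by (metis mult_eq_0_iff)
qed

lemma FTd_Zhom: assumes d: "distn v" and z: "Zhom v" shows "Zhom (FTd I \<chi> v)"
  unfolding Zhom_def
proof (intro allI impI)
  fix a k \<eta> c j assume c: "c \<in> \<Lambda>" and ac: "av c = rad (- j)"
  have c0: "c \<noteq> 0" using Lam_nz c by blast
  have c': "inverse c \<in> \<Lambda>" using Lam_inv[OF c] .
  have ac': "av (inverse c) = rad (- (- j))" using ac by (simp add: avinv rad_minus)
  have "v (BC (smul (inverse c) (- \<eta>)) (- k - - j) (smul (inverse (inverse c)) a)) = 0 \<longleftrightarrow> v (BC (- \<eta>) (- k) a) = 0"
    by (rule ZhomD[OF z c' ac'])
  then have key: "v (BC (- smul (inverse c) \<eta>) (- (k - j)) (smul c a)) = 0 \<longleftrightarrow> v (BC (- \<eta>) (- k) a) = 0"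
    by (simp add: smul_neg)
  show "FTd I \<chi> v (BC (smul c a) (k - j) (smul (inverse c) \<eta>)) = 0 \<longleftrightarrow> FTd I \<chi> v (BC a k \<eta>) = 0"
    unfolding FTd_BC[OF d] using key by simp
qed

end


context padic begin

lemma BC_decomp: assumes "r \<le> r'" and d: "distn v"
  shows "v (BC c r \<eta>) = (\<Sum>g\<in>grid c r r'. v (BC g r' \<eta>))"
proof -
  have "BC c r \<eta> = (\<lambda>y. \<Sum>g\<in>grid c r r'. BC g r' \<eta> y)"
  proof
    fix y
    have "BC c r \<eta> y = (\<Sum>g\<in>grid c r r'. ind (ball g r') y) * ee \<eta> y"
      unfolding BC_def using ball_decomp[OF assms(1), of c] by (metis (no_types, lifting))
    then show "BC c r \<eta> y = (\<Sum>g\<in>grid c r r'. BC g r' \<eta> y)"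
      unfolding BC_def by (simp add: sum_distrib_right)
  qed
  then show ?thesis using d_sum[OF d grid_finite, where f="\<lambda>g. BC g r' \<eta>"] SF_BC by simp
qed

lemma exists_nz: "(\<Sum>g\<in>A. f g) \<noteq> 0 \<Longrightarrow> \<exists>g\<in>A. f g \<noteq> (0::complex)"
  by (rule sum_nz)

lemma BC_shift: assumes "nrm av \<theta> \<le> rad (- r)"
  shows "BC g r (\<eta> + \<theta>) = (\<lambda>y. ee \<theta> g * BC g r \<eta> y)"
proof
  fix y
  show "BC g r (\<eta> + \<theta>) y = ee \<theta> g * BC g r \<eta> y"
  proof (cases "y \<in> ball g r")
    case True
    then have "nrm av (y - g) * nrm av \<theta> \<le> rad r * rad (- r)"
      using assms unfolding mem_ball by (intro mult_mono) auto
    also have "\<dots> = 1" by (simp add: rad_minus)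
    finally have "ee \<theta> (y - g) = 1" by (rule ee_small2)
    then have "ee \<theta> y = ee \<theta> g" using ee_addx[of \<theta> g "y - g"] by simp
    then show ?thesis unfolding BC_def ee_add by simp
  next
    case False then show ?thesis unfolding BC_def by (simp add: ind_def)
  qed
qed

lemma W_BC0: "distn v \<Longrightarrow> FTd I \<chi> v (ind (ball \<eta> (- k))) = cI (- k) * v (BC 0 k \<eta>)"
  using FTd_BC[of v \<eta> "- k" 0] unfolding BC_zero by simp

lemma exists_rad_above: "\<exists>t. t \<ge> t0 \<and> rad (- t) > C"
proof -
  obtain k where "k \<le> - t0" "rad k > C" using rad_big_ge by blast
  then show ?thesis by (intro exI[of _ "- k"]) auto
qed

lemma G3: assumes d: "distn v" and z: "Zhom v" and xi: "\<xi> \<noteq> 0"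
  shows "\<xi> \<in> suppd av (FTd I \<chi> v) \<longleftrightarrow> (0, \<xi>) \<in> WF av \<Lambda> \<chi> v"
proof -
  define W where "W = FTd I \<chi> v"
  have dW: "distn W" unfolding W_def by (rule FTd_dist[OF d])
  have zW: "Zhom W" unfolding W_def by (rule FTd_Zhom[OF d z])
  have nx: "nrm av \<xi> > 0" using nrm_pos xi by blast
  have rel: "v (BC 0 k \<eta>) \<noteq> 0 \<longleftrightarrow> W (ind (ball \<eta> (- k))) \<noteq> 0" for k \<eta>
    unfolding W_def W_BC0[OF d] by simp
  show ?thesis
  proof
    assume "\<xi> \<in> suppd av (FTd I \<chi> v)"
    then have sp: "\<forall>k. \<exists>a r. ball a r \<subseteq> ball \<xi> k \<and> W (ind (ball a r)) \<noteq> 0"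
      unfolding W_def suppd_balls[OF FTd_dist[OF d]] .
    have "\<forall>k m. rad m < nrm av \<xi> \<longrightarrow> UNB (\<lambda>\<eta>. v (BC 0 k \<eta>)) \<xi> m"
    proof (intro allI impI)
      fix k m assume m: "rad m < nrm av \<xi>"
      obtain a r where ar: "ball a r \<subseteq> ball \<xi> m" "W (ind (ball a r)) \<noteq> 0" using sp by blast
      show "UNB (\<lambda>\<eta>. v (BC 0 k \<eta>)) \<xi> m" unfolding UNB_def
      proof
        fix C
        obtain t where t: "t \<ge> r + k" "rad (- t) > C / nrm av \<xi>" using exists_rad_above by blast
        define r' where "r' = t - k"
        have rr: "r \<le> r'" unfolding r'_def using t by simp
        have "W (BC a r 0) = (\<Sum>g\<in>grid a r r'. W (BC g r' 0))" by (rule BC_decomp[OF rr dW])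
        then have "(\<Sum>g\<in>grid a r r'. W (BC g r' 0)) \<noteq> 0" using ar(2) by (simp add: BC_zero)
        then obtain g where g: "g \<in> grid a r r'" "W (BC g r' 0) \<noteq> 0" using exists_nz by blast
        define c where "c = w powi (- t)"
        have c: "c \<in> \<Lambda>" "av c = rad (- t)" unfolding c_def using Lam_powi av_w_powi by auto
        have "W (BC (smul c g) (r' - t) (smul (inverse c) 0)) \<noteq> 0" using ZhomD[OF zW c] g(2) by blast
        then have W1: "W (ind (ball (smul c g) (- k))) \<noteq> 0" by (simp add: r'_def BC_zero)
        have gb: "g \<in> ball \<xi> m" using grid_sub[OF g(1)] ar(1) by blast
        have cone: "smul c g \<in> cone \<xi> m" by (rule coneI[OF c(1) gb])
        have "nrm av (smul c g) = rad (- t) * nrm av \<xi>" using nrm_cone[OF c(1) gb m] c(2) by simp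
        also have "\<dots> > C" using t(2) nx by (simp add: field_simps)
        finally show "\<exists>\<eta>\<in>cone \<xi> m. C < nrm av \<eta> \<and> v (BC 0 k \<eta>) \<noteq> 0"
          using cone W1 rel[of k "smul c g"] by auto
      qed
    qed
    then show "(0, \<xi>) \<in> WF av \<Lambda> \<chi> v" unfolding WF_iff[OF d] using xi by blast
  next
    assume wf: "(0, \<xi>) \<in> WF av \<Lambda> \<chi> v"
    show "\<xi> \<in> suppd av (FTd I \<chi> v)"
    proof (rule ccontr)
      assume "\<xi> \<notin> suppd av (FTd I \<chi> v)"
      then obtain m0 where m0: "\<forall>a r. ball a r \<subseteq> ball \<xi> m0 \<longrightarrow> W (ind (ball a r)) = 0"
        unfolding W_def suppd_balls[OF FTd_dist[OF d]] by blast
      obtain m1 where m1: "rad m1 < nrm av \<xi>" using rad_small[OF nx] by blast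
      define m where "m = max m0 m1"
      have m: "rad m < nrm av \<xi>" unfolding m_def using rad_mono[of m1 "max m0 m1"] m1 by simp
      have "UNB (\<lambda>\<eta>. v (BC 0 0 \<eta>)) \<xi> m" using wf m unfolding WF_iff[OF d] by blast
      then obtain \<eta> where \<eta>: "\<eta> \<in> cone \<xi> m" "nrm av \<eta> > rad (- m) * nrm av \<xi>" "v (BC 0 0 \<eta>) \<noteq> 0"
        unfolding UNB_def by blast
      obtain c y where cy: "c \<in> \<Lambda>" "y \<in> ball \<xi> m" "\<eta> = smul c y" using \<eta>(1) by (rule coneE)
      obtain j where j: "av c = rad (- j)" using Lam_rad[OF cy(1)] by blast
      have "rad (- j) * nrm av \<xi> > rad (- m) * nrm av \<xi>" using \<eta>(2) nrm_cone[OF cy(1,2) m] cy(3) j by simp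
      then have "rad (- j) > rad (- m)" using nx by simp
      then have jm: "j \<ge> m" using rad_less_iff by simp
      have "ball y j \<subseteq> ball \<xi> m0"
      proof -
        have "ball y j \<subseteq> ball \<xi> m" using ball_sub[OF cy(2) jm] .
        moreover have "ball \<xi> m \<subseteq> ball \<xi> m0" unfolding m_def by (rule ball_mono) simp
        ultimately show ?thesis by blast
      qed
      then have "W (BC y j 0) = 0" using m0 by (simp add: BC_zero)
      then have "W (BC (smul c y) (j - j) (smul (inverse c) 0)) = 0" using ZhomD[OF zW cy(1) j] by blast
      then have "W (ind (ball \<eta> (- 0))) = 0" using cy(3) by (simp add: BC_zero)
      then show False using rel[of 0 \<eta>] \<eta>(3) by simp
    qed
  qed
qed

end


context padic begin

lemma W_BC_nz: "distn v \<Longrightarrow> FTd I \<chi> v (BC a k \<eta>) \<noteq> 0 \<longleftrightarrow> v (BC (- \<eta>) (- k) a) \<noteq> 0"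
  using FTd_BC[of v a k \<eta>] by simp

lemma smul_inv_smul: "c \<noteq> 0 \<Longrightarrow> smul (inverse c) (smul c x) = (x :: 'n \<Rightarrow> 'a)" by (rule smul_inv)

lemma G1f: assumes d: "distn v" and z: "Zhom v" and x0: "x \<noteq> 0" and xi: "\<xi> \<noteq> 0"
  and wf: "(x, \<xi>) \<in> WF av \<Lambda> \<chi> v"
  shows "(\<xi>, - x) \<in> WF av \<Lambda> \<chi> (FTd I \<chi> v)"
proof -
  have dW: "distn (FTd I \<chi> v)" by (rule FTd_dist[OF d])
  have nx: "nrm av x > 0" using nrm_pos x0 by blast
  have nxi: "nrm av \<xi> > 0" using nrm_pos xi by blast
  have hyp: "\<And>k m. rad m < nrm av \<xi> \<Longrightarrow> UNB (\<lambda>\<eta>. v (BC x k \<eta>)) \<xi> m" using wf unfolding WF_iff[OF d] by blast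
  have "\<forall>s m. rad m < nrm av (- x) \<longrightarrow> UNB (\<lambda>\<zeta>. FTd I \<chi> v (BC \<xi> s \<zeta>)) (- x) m"
  proof (intro allI impI)
    fix s m assume m: "rad m < nrm av (- x)"
    then have m': "rad m < nrm av x" by simp
    obtain m1 where m1: "rad m1 < nrm av \<xi>" using rad_small[OF nxi] by blast
    define mm where "mm = max s m1"
    have mm: "rad mm < nrm av \<xi>" "mm \<ge> s" unfolding mm_def using rad_mono[of m1 "max s m1"] m1 by auto
    show "UNB (\<lambda>\<zeta>. FTd I \<chi> v (BC \<xi> s \<zeta>)) (- x) m" unfolding UNB_def
    proof
      fix C
      define C' where "C' = nrm av \<xi> * max (C / nrm av x) (rad (- (m + s)))"
      obtain \<eta> where \<eta>: "\<eta> \<in> cone \<xi> mm" "nrm av \<eta> > C'" "v (BC x m \<eta>) \<noteq> 0"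
        using hyp[OF mm(1), of m] unfolding UNB_def by blast
      obtain c z' where cz: "c \<in> \<Lambda>" "z' \<in> ball \<xi> mm" "\<eta> = smul c z'" using \<eta>(1) by (rule coneE)
      have c0: "c \<noteq> 0" using Lam_nz cz(1) by blast
      obtain j where j: "av c = rad (- j)" using Lam_rad[OF cz(1)] by blast
      have ne: "nrm av \<eta> = rad (- j) * nrm av \<xi>" using nrm_cone[OF cz(1,2) mm(1)] cz(3) j by simp
      have "rad (- j) * nrm av \<xi> > nrm av \<xi> * max (C / nrm av x) (rad (- (m + s)))"
        using \<eta>(2) ne unfolding C'_def by simp
      then have big: "rad (- j) > max (C / nrm av x) (rad (- (m + s)))" using nxi by (simp add: mult.commute)
      then have "rad (- j) > rad (- (m + s))" by simp
      then have jms: "j - s \<ge> m" using rad_less_iff by simp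
      have bigC: "rad (- j) * nrm av x > C" using big nx by (simp add: field_simps)
      have "v (BC x m \<eta>) = (\<Sum>g\<in>grid x m (j - s). v (BC g (j - s) \<eta>))" by (rule BC_decomp[OF jms d])
      then have "(\<Sum>g\<in>grid x m (j - s). v (BC g (j - s) \<eta>)) \<noteq> 0" using \<eta>(3) by simp
      then obtain g where g: "g \<in> grid x m (j - s)" "v (BC g (j - s) \<eta>) \<noteq> 0" by (rule exists_nz[THEN bexE])
      define \<theta> where "\<theta> = smul c (\<xi> - z')"
      have th: "nrm av \<theta> \<le> rad (- (j - s))"
      proof -
        have "nrm av \<theta> = rad (- j) * nrm av (\<xi> - z')" unfolding \<theta>_def nrm_smul j ..
        also have "\<dots> \<le> rad (- j) * rad mm" using cz(2) ball_sym unfolding mem_ball by (intro mult_left_mono) (auto simp: nrm_minus)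
        also have "\<dots> = rad (mm - j)" by (simp add: rad_add[symmetric])
        also have "\<dots> \<le> rad (- (j - s))" using mm(2) by (simp add: rad_le_iff)
        finally show ?thesis .
      qed
      have et: "\<eta> + \<theta> = smul c \<xi>" unfolding \<theta>_def cz(3) smul_add by simp
      have "BC g (j - s) (\<eta> + \<theta>) = (\<lambda>y. ee \<theta> g * BC g (j - s) \<eta> y)" by (rule BC_shift[OF th])
      then have "v (BC g (j - s) (smul c \<xi>)) = ee \<theta> g * v (BC g (j - s) \<eta>)"
        using d_cmult[OF d SF_BC] et by metis
      then have v1: "v (BC g (j - s) (smul c \<xi>)) \<noteq> 0" using g(2) by simp
      have "v (BC (smul c g) ((j - s) - j) (smul (inverse c) (smul c \<xi>))) \<noteq> 0"
        using ZhomD[OF z cz(1) j] v1 by blast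
      moreover have "smul (inverse c) (smul c \<xi>) = \<xi>" by (rule smul_inv[OF c0])
      ultimately have v2: "v (BC (smul c g) (- s) \<xi>) \<noteq> 0" by simp
      define \<zeta> where "\<zeta> = smul c (- g)"
      have gb: "g \<in> ball x m" by (rule grid_sub[OF g(1)])
      then have gb': "- g \<in> ball (- x) m" using ball_neg by blast
      have zc: "\<zeta> \<in> cone (- x) m" unfolding \<zeta>_def by (rule coneI[OF cz(1) gb'])
      have "nrm av \<zeta> = rad (- j) * nrm av x" unfolding \<zeta>_def using nrm_cone[OF cz(1) gb' m] j by simp
      then have zC: "nrm av \<zeta> > C" using bigC by simp
      have "- \<zeta> = smul c g" unfolding \<zeta>_def smul_neg by simp
      then have "FTd I \<chi> v (BC \<xi> s \<zeta>) \<noteq> 0" using W_BC_nz[OF d] v2 by simp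
      then show "\<exists>\<zeta>\<in>cone (- x) m. C < nrm av \<zeta> \<and> FTd I \<chi> v (BC \<xi> s \<zeta>) \<noteq> 0" using zc zC by blast
    qed
  qed
  then show ?thesis unfolding WF_iff[OF dW] using x0 by simp
qed

lemma G1b: assumes d: "distn v" and z: "Zhom v" and x0: "x \<noteq> 0" and xi: "\<xi> \<noteq> 0"
  and wfW: "(\<xi>, - x) \<in> WF av \<Lambda> \<chi> (FTd I \<chi> v)"
  shows "(x, \<xi>) \<in> WF av \<Lambda> \<chi> v"
proof -
  have dW: "distn (FTd I \<chi> v)" by (rule FTd_dist[OF d])
  have nx: "nrm av x > 0" using nrm_pos x0 by blast
  have nxi: "nrm av \<xi> > 0" using nrm_pos xi by blast
  have hyp: "\<And>s m. rad m < nrm av x \<Longrightarrow> UNB (\<lambda>\<zeta>. FTd I \<chi> v (BC \<xi> s \<zeta>)) (- x) m"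
    using wfW unfolding WF_iff[OF dW] by simp
  have "\<forall>k m. rad m < nrm av \<xi> \<longrightarrow> UNB (\<lambda>\<eta>. v (BC x k \<eta>)) \<xi> m"
  proof (intro allI impI)
    fix k m assume m: "rad m < nrm av \<xi>"
    define s where "s = m"
    obtain m2 where m2: "rad m2 < nrm av x" using rad_small[OF nx] by blast
    define mm where "mm = max k m2"
    have mm: "rad mm < nrm av x" "mm \<ge> k" unfolding mm_def using rad_mono[of m2 "max k m2"] m2 by auto
    show "UNB (\<lambda>\<eta>. v (BC x k \<eta>)) \<xi> m" unfolding UNB_def
    proof
      fix C
      define C' where "C' = nrm av x * max (C / nrm av \<xi>) (rad (- (k + s)))"
      obtain \<zeta> where \<zeta>: "\<zeta> \<in> cone (- x) mm" "nrm av \<zeta> > C'" "FTd I \<chi> v (BC \<xi> s \<zeta>) \<noteq> 0"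
        using hyp[OF mm(1), of s] unfolding UNB_def by blast
      obtain c z' where cz: "c \<in> \<Lambda>" "z' \<in> ball (- x) mm" "\<zeta> = smul c z'" using \<zeta>(1) by (rule coneE)
      have c0: "c \<noteq> 0" using Lam_nz cz(1) by blast
      obtain j where j: "av c = rad (- j)" using Lam_rad[OF cz(1)] by blast
      have mm': "rad mm < nrm av (- x)" using mm(1) by simp
      have ne: "nrm av \<zeta> = rad (- j) * nrm av x" using nrm_cone[OF cz(1,2) mm'] cz(3) j by simp
      have "rad (- j) * nrm av x > nrm av x * max (C / nrm av \<xi>) (rad (- (k + s)))"
        using \<zeta>(2) ne unfolding C'_def by simp
      then have big: "rad (- j) > max (C / nrm av \<xi>) (rad (- (k + s)))" using nx by (simp add: mult.commute)
      then have "rad (- j) > rad (- (k + s))" by simp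
      then have jks: "j - s \<ge> k" using rad_less_iff by simp
      have bigC: "rad (- j) * nrm av \<xi> > C" using big nxi by (simp add: field_simps)
      define y where "y = - z'"
      have yb: "y \<in> ball x mm" unfolding y_def using cz(2) ball_neg[of "- z'" x mm] by simp
      then have yk: "y \<in> ball x k" using ball_mono[OF mm(2)] by blast
      have mz: "- \<zeta> = smul c y" unfolding y_def cz(3) smul_neg by simp
      have "v (BC (- \<zeta>) (- s) \<xi>) \<noteq> 0" using \<zeta>(3) W_BC_nz[OF d] by simp
      then have a1: "v (BC (smul c y) ((j - s) - j) (smul (inverse c) (smul c \<xi>))) \<noteq> 0"
        using mz smul_inv[OF c0, of \<xi>] by simp
      define cc where "cc = smul c \<xi>"
      have vy: "v (BC y (j - s) cc) \<noteq> 0" using ZhomD[OF z cz(1) j] a1 unfolding cc_def by blast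
      define r where "r = s - j"
      have rr: "- r = j - s" unfolding r_def by simp
      have sub: "ball y (- r) \<subseteq> ball x k" unfolding rr using ball_sub[OF yk jks] .
      have "\<exists>\<eta>\<in>ball cc r. v (BC x k \<eta>) \<noteq> 0"
      proof (rule ccontr)
        assume "\<not> (\<exists>\<eta>\<in>ball cc r. v (BC x k \<eta>) \<noteq> 0)"
        then have vz: "\<And>\<eta>. \<eta> \<in> ball cc r \<Longrightarrow> v (BC x k \<eta>) = 0" by blast
        define h where "h = (\<lambda>z \<eta>. (ind (ball cc r) \<eta> * ee \<eta> (- y)) * BC x k \<eta> z)"
        define R where "R = max (nrm av y) (max (nrm av x) (rad k))"
        have R0: "R \<ge> 0" unfolding R_def by (meson le_max_iff_disj nrm_nonneg)
        obtain M where M: "M \<ge> r" "rad M < inverse (R + 1)" using rad_small_ge[of "inverse (R + 1)" r] R0 by auto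
        have MR: "rad M * R \<le> 1"
        proof -
          have "rad M * R \<le> inverse (R + 1) * R" using M(2) R0 by (intro mult_right_mono) auto
          also have "\<dots> \<le> 1" using R0 by (simp add: field_simps)
          finally show ?thesis .
        qed
        obtain K1 where K1: "rad K1 > nrm av cc" using rad_big by blast
        define K where "K = min r K1"
        have KM: "K \<le> M" unfolding K_def using M(1) by simp
        have h1: "(\<lambda>z. h z \<eta>) \<in> SFn" for \<eta> unfolding h_def by (rule SF_cmult[OF SF_BC])
        have h2: "uconst (h z) M" for z
        proof (cases "z \<in> ball x k")
          case False then show ?thesis unfolding h_def BC_def by (simp add: ind_def uconst_const)
        next
          case True
          have nz: "nrm av z \<le> R" using ball_nrm_le[OF True] unfolding R_def by simp
          have ny: "nrm av (- y) \<le> R" unfolding R_def by simp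
          have u1: "uconst (ee z) M" by (rule uconst_ee) (use MR nz in \<open>meson mult_left_mono order.trans radnn\<close>)
          have u2: "uconst (ee (- y)) M" by (rule uconst_ee) (use MR ny in \<open>meson mult_left_mono order.trans radnn\<close>)
          have "uconst (\<lambda>\<eta>. (ind (ball cc r) \<eta> * ee (- y) \<eta>) * (ind (ball x k) z * ee z \<eta>)) M"
            by (intro uconst_mult uconst_const uconst_ind_ball M(1) u1 u2)
          then show ?thesis unfolding h_def BC_def by (simp add: ee_comm)
        qed
        have h3: "\<eta> \<in> ball 0 K" if "h z \<eta> \<noteq> 0" for z \<eta>
        proof -
          have e: "\<eta> \<in> ball cc r" using that unfolding h_def ind_def by (cases "\<eta> \<in> ball cc r") auto
          have "nrm av \<eta> \<le> max (nrm av cc) (rad r)" by (rule ball_nrm_le[OF e])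
          also have "\<dots> \<le> rad K" unfolding K_def using K1 rad_mono[of "min r K1" r] rad_mono[of "min r K1" K1] by simp
          finally show ?thesis unfolding ball0 .
        qed
        have fub: "v (\<lambda>z. I (h z)) = I (\<lambda>\<eta>. v (\<lambda>z. h z \<eta>))" by (rule fubini[OF d KM h1 h2 h3])
        have rhs: "v (\<lambda>z. h z \<eta>) = 0" for \<eta>
        proof -
          have "v (\<lambda>z. h z \<eta>) = (ind (ball cc r) \<eta> * ee \<eta> (- y)) * v (BC x k \<eta>)"
            unfolding h_def by (rule d_cmult[OF d SF_BC])
          then show ?thesis using vz by (cases "\<eta> \<in> ball cc r") (auto simp: ind_def)
        qed
        have "I (\<lambda>\<eta>. v (\<lambda>z. h z \<eta>)) = 0" using rhs d_zero[OF I_dist] by simp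
        moreover have "(\<lambda>z. I (h z)) = (\<lambda>z. (cI r * ee cc (- y)) * BC y (- r) cc z)"
        proof
          fix z
          have "(\<lambda>\<eta>. h z \<eta>) = (\<lambda>\<eta>. ind (ball x k) z * (ind (ball cc r) \<eta> * ee (z - y) \<eta>))"
          proof
            fix \<eta>
            have "ee \<eta> (- y) * ee \<eta> z = ee (z - y) \<eta>"
              using ee_addx[of \<eta> z "- y"] ee_comm[of \<eta> "z - y"] by (simp add: mult.commute)
            then show "h z \<eta> = ind (ball x k) z * (ind (ball cc r) \<eta> * ee (z - y) \<eta>)"
              unfolding h_def BC_def by (simp add: algebra_simps)
          qed
          then have "I (h z) = I (\<lambda>\<eta>. ind (ball x k) z * (ind (ball cc r) \<eta> * ee (z - y) \<eta>))"
            by (rule arg_cong[where f=I])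
          also have "\<dots> = ind (ball x k) z * I (\<lambda>\<eta>. ind (ball cc r) \<eta> * ee (z - y) \<eta>)"
            by (rule I_cmult[OF SF_mult[OF SF_ind_ball lc_ee]])
          also have "I (\<lambda>\<eta>. ind (ball cc r) \<eta> * ee (z - y) \<eta>) = FT I \<chi> (ind (ball cc r)) (z - y)"
            unfolding FT_eq ..
          also have "\<dots> = cI r * ee (z - y) cc * ind (ball y (- r)) z"
            unfolding FT_ind_ball by (simp add: ind_def mem_ball)
          finally have "I (h z) = ind (ball x k) z * (cI r * ee (z - y) cc * ind (ball y (- r)) z)" .
          also have "\<dots> = (cI r * ee cc (- y)) * BC y (- r) cc z"
          proof (cases "z \<in> ball y (- r)")
            case True
            then have "z \<in> ball x k" using sub by blast
            moreover have "ee (z - y) cc = ee cc z * ee cc (- y)"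
              using ee_comm[of "z - y" cc] ee_addx[of cc z "- y"] by simp
            ultimately show ?thesis using True unfolding BC_def by (simp add: ind_def algebra_simps)
          next
            case False then show ?thesis unfolding BC_def by (simp add: ind_def)
          qed
          finally show "I (h z) = (cI r * ee cc (- y)) * BC y (- r) cc z" .
        qed
        then have "v (\<lambda>z. I (h z)) = (cI r * ee cc (- y)) * v (BC y (- r) cc)"
          using d_cmult[OF d SF_BC] by simp
        ultimately have "(cI r * ee cc (- y)) * v (BC y (- r) cc) = 0" using fub by simp
        then show False using vy rr by simp
      qed
      then obtain \<eta> where \<eta>: "\<eta> \<in> ball cc r" "v (BC x k \<eta>) \<noteq> 0" by blast
      define \<eta>' where "\<eta>' = smul (inverse c) \<eta>"
      have "\<eta>' - \<xi> = smul (inverse c) (\<eta> - cc)"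
        unfolding \<eta>'_def cc_def smul_diff[symmetric] using smul_inv[OF c0, of \<xi>] by simp
      then have "nrm av (\<eta>' - \<xi>) = rad j * nrm av (\<eta> - cc)"
        by (simp add: nrm_smul avinv j rad_minus)
      also have "\<dots> \<le> rad j * rad r" using \<eta>(1) unfolding mem_ball by (intro mult_left_mono) auto
      also have "\<dots> = rad m" unfolding r_def s_def by (simp add: rad_add[symmetric])
      finally have eb: "\<eta>' \<in> ball \<xi> m" unfolding mem_ball .
      have ee': "\<eta> = smul c \<eta>'" unfolding \<eta>'_def by (rule smul_inv2[OF c0, symmetric])
      have ec: "\<eta> \<in> cone \<xi> m" unfolding ee' by (rule coneI[OF cz(1) eb])
      have "nrm av \<eta> = rad (- j) * nrm av \<xi>" unfolding ee' using nrm_cone[OF cz(1) eb m] j by simp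
      then have "nrm av \<eta> > C" using bigC by simp
      then show "\<exists>\<eta>\<in>cone \<xi> m. C < nrm av \<eta> \<and> v (BC x k \<eta>) \<noteq> 0" using ec \<eta>(2) by blast
    qed
  qed
  then show ?thesis unfolding WF_iff[OF d] using xi by simp
qed

end


context padic begin

lemma FF_fun: "f \<in> SFn \<Longrightarrow> FT I \<chi> (FT I \<chi> f) = (\<lambda>y. f (- y))"
  using I_inv by (intro ext) simp

lemma FF_ind: assumes d: "distn u"
  shows "FTd I \<chi> (FTd I \<chi> u) (ind (ball a r)) = u (ind (ball (- a) r))"
proof -
  have "(\<lambda>y. ind (ball a r) (- y)) = ind (ball (- a) r)"
  proof
    fix y show "ind (ball a r) (- y) = ind (ball (- a) r) y"
      using ball_neg[of "- y" a r] by (simp add: ind_def)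
  qed
  then show ?thesis unfolding FTd_def FF_fun[OF SF_ind_ball] by simp
qed

lemma ball_neg_sub: "ball a r \<subseteq> ball b k \<Longrightarrow> ball (- a) r \<subseteq> ball (- b) k"
proof
  fix z assume s: "ball a r \<subseteq> ball b k" and z: "z \<in> ball (- a) r"
  have "- z \<in> ball a r" using z ball_neg[of "- z" a r] by simp
  then have "- z \<in> ball b k" using s by blast
  then show "z \<in> ball (- b) k" using ball_neg[of "- z" b k] by simp
qed

lemma supp_refl: assumes d: "distn u"
  shows "- x \<in> suppd av (FTd I \<chi> (FTd I \<chi> u)) \<longleftrightarrow> x \<in> suppd av u"
proof -
  have dd: "distn (FTd I \<chi> (FTd I \<chi> u))" by (rule FTd_dist[OF FTd_dist[OF d]])
  show ?thesis unfolding suppd_balls[OF dd] suppd_balls[OF d] FF_ind[OF d]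
  proof
    assume h: "\<forall>k. \<exists>a r. ball a r \<subseteq> ball (- x) k \<and> u (ind (ball (- a) r)) \<noteq> 0"
    show "\<forall>k. \<exists>a r. ball a r \<subseteq> ball x k \<and> u (ind (ball a r)) \<noteq> 0"
    proof
      fix k
      obtain a r where ar: "ball a r \<subseteq> ball (- x) k" "u (ind (ball (- a) r)) \<noteq> 0" using h by blast
      have "ball (- a) r \<subseteq> ball x k" using ball_neg_sub[OF ar(1)] by simp
      then show "\<exists>a r. ball a r \<subseteq> ball x k \<and> u (ind (ball a r)) \<noteq> 0" using ar(2) by blast
    qed
  next
    assume h: "\<forall>k. \<exists>a r. ball a r \<subseteq> ball x k \<and> u (ind (ball a r)) \<noteq> 0"
    show "\<forall>k. \<exists>a r. ball a r \<subseteq> ball (- x) k \<and> u (ind (ball (- a) r)) \<noteq> 0"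
    proof
      fix k
      obtain a r where ar: "ball a r \<subseteq> ball x k" "u (ind (ball a r)) \<noteq> 0" using h by blast
      have "ball (- a) r \<subseteq> ball (- x) k" using ball_neg_sub[OF ar(1)] .
      then show "\<exists>a' r'. ball a' r' \<subseteq> ball (- x) k \<and> u (ind (ball (- a') r')) \<noteq> 0"
        using ar(2) by (intro exI[of _ "- a"] exI[of _ r]) simp
    qed
  qed
qed

lemma main:
  assumes d: "distn u" and h: "homogeneous av \<Lambda> chiL u"
  shows "(\<forall>x \<xi>. x \<noteq> 0 \<longrightarrow> \<xi> \<noteq> 0 \<longrightarrow>
            ((x, \<xi>) \<in> WF av \<Lambda> \<chi> u \<longleftrightarrow> (\<xi>, - x) \<in> WF av \<Lambda> \<chi> (FTd I \<chi> u))) \<and>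
         (\<forall>x. x \<noteq> 0 \<longrightarrow>
            (x \<in> suppd av u \<longleftrightarrow> (0, - x) \<in> WF av \<Lambda> \<chi> (FTd I \<chi> u))) \<and>
         (\<forall>\<xi>. \<xi> \<noteq> 0 \<longrightarrow>
            (\<xi> \<in> suppd av (FTd I \<chi> u) \<longleftrightarrow> (0, \<xi>) \<in> WF av \<Lambda> \<chi> u))"
proof (intro conjI allI impI)
  have z: "Zhom u" by (rule hom_Zhom[OF d h])
  have dW: "distn (FTd I \<chi> u)" by (rule FTd_dist[OF d])
  have zW: "Zhom (FTd I \<chi> u)" by (rule FTd_Zhom[OF d z])
  {
    fix x \<xi> :: "'n \<Rightarrow> 'a" assume x0: "x \<noteq> 0" and xi: "\<xi> \<noteq> 0"
    show "(x, \<xi>) \<in> WF av \<Lambda> \<chi> u \<longleftrightarrow> (\<xi>, - x) \<in> WF av \<Lambda> \<chi> (FTd I \<chi> u)"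
      using G1f[OF d z x0 xi] G1b[OF d z x0 xi] by blast
  }
  {
    fix x :: "'n \<Rightarrow> 'a" assume x0: "x \<noteq> 0"
    have "- x \<noteq> 0" using x0 by simp
    then have "- x \<in> suppd av (FTd I \<chi> (FTd I \<chi> u)) \<longleftrightarrow> (0, - x) \<in> WF av \<Lambda> \<chi> (FTd I \<chi> u)"
      by (rule G3[OF dW zW])
    then show "x \<in> suppd av u \<longleftrightarrow> (0, - x) \<in> WF av \<Lambda> \<chi> (FTd I \<chi> u)"
      using supp_refl[OF d] by simp
  }
  {
    fix \<xi> :: "'n \<Rightarrow> 'a" assume xi: "\<xi> \<noteq> 0"
    show "\<xi> \<in> suppd av (FTd I \<chi> u) \<longleftrightarrow> (0, \<xi>) \<in> WF av \<Lambda> \<chi> u" by (rule G3[OF d z xi])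
  }
qed

end

theorem theoremA1:
  fixes av :: "'a::field_char_0 \<Rightarrow> real" and w :: 'a and \<chi> :: "'a \<Rightarrow> complex"
    and I :: "(('n::finite \<Rightarrow> 'a) \<Rightarrow> complex) \<Rightarrow> complex"
    and \<Lambda> :: "'a set" and u :: "(('n \<Rightarrow> 'a) \<Rightarrow> complex) \<Rightarrow> complex"
  assumes "nonarch_local_field av w"
    and "additive_char av \<chi>"
    and "self_dual_haar av \<chi> I"
    and "fin_index_subgroup \<Lambda>" and "w \<in> \<Lambda>"
    and "distribution av u"
    and "\<exists>chiL. homogeneous av \<Lambda> chiL u"
  shows "(\<forall>x \<xi>. x \<noteq> 0 \<longrightarrow> \<xi> \<noteq> 0 \<longrightarrow>
            ((x, \<xi>) \<in> WF av \<Lambda> \<chi> u \<longleftrightarrow> (\<xi>, - x) \<in> WF av \<Lambda> \<chi> (FTd I \<chi> u))) \<and>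
         (\<forall>x. x \<noteq> 0 \<longrightarrow>
            (x \<in> suppd av u \<longleftrightarrow> (0, - x) \<in> WF av \<Lambda> \<chi> (FTd I \<chi> u))) \<and>
         (\<forall>\<xi>. \<xi> \<noteq> 0 \<longrightarrow>
            (\<xi> \<in> suppd av (FTd I \<chi> u) \<longleftrightarrow> (0, \<xi>) \<in> WF av \<Lambda> \<chi> u))"
proof -
  interpret padic av w \<chi> I \<Lambda> using assms(1-5) by unfold_locales
  obtain chiL where h: "homogeneous av \<Lambda> chiL u" using assms(7) by blast
  show ?thesis by (rule main[OF assms(6) h])
qed


end
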